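(* Assume the Setting and Constants below and that $(L_g,L_c)$ satisfies $(S_2)$. Then $\Theta$ is well defined on $\Gamma_0$ (i.e. $A_c+r$ is globally invertible for every $(r,k_u,k_s)\in\Gamma_0$). Furthermore $\Gamma_0$ is nonempty, invariant under $\Theta$ (i.e. $\Theta(\Gamma_0)\subseteq\Gamma_0$), and closed.
   Context: Notation. $C^k_b(Y,Z)$ is the Banach space of $C^k$ maps $f:Y\to Z$ between Banach spaces with $\|f\|_k:=\max_{0\le j\le k}\sup_y\|D^jf(y)\|<\infty$ (operator norms). Setting. Let $n\ge2$ be an integer and $X$ a Banach space with $X=X_c\oplus X_u\oplus X_s$ for closed subspaces, whose norm satisfies $\|x\|=\max\{\|x_c\|,\|x_u\|,\|x_s\|\}$. Let $A$ be a bounded linear operator on $X$ leaving $X_c,X_u,X_s$ invariant, with restrictions $A_c,A_u,A_s$; $A_c,A_u$ invertible, and $\|A_c^{-1}\|^{\tilde n}\|A_s\|<1$, $\|A_u^{-1}\|\|A_c\|^{\tilde n}<1$ for $1\le\tilde n\le n$. Let $L_g,L_c\ge0$, $F=A+g$ with $g\in C^n_b(X,X)$, $g(0)=0$, $Dg(0)=0$, $\|Dg\|_0\le L_g$, $g=(g_c,g_u,g_s)$ its components; $k_c\in C^n_b(X_c,X_c)$ with $k_c(0)=0$, $Dk_c(0)=0$, $\|Dk_c\|_0\le L_c$. For $k_u:X_c\to X_u$, $k_s:X_c\to X_s$ put $K(x):=(x+k_c(x))+k_u(x)+k_s(x)$. Constants. $L_r:=\frac{L_g+L_c(2\|A_c\|+L_g)}{1-L_c}$,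 $L_t:=\frac{\|A_c^{-1}\|^2L_r}{1-\|A_c^{-1}\|L_r}$, $L_u:=\frac{\|A_u^{-1}\|(1+L_c)L_g}{1-L_r\|A_u^{-1}\|-\|A_c\|\|A_u^{-1}\|}$, $L_s:=\frac{\|A_c^{-1}\|(1+L_c)L_g}{1-L_r\|A_c^{-1}\|-\|A_s\|\|A_c^{-1}\|}$, $L_{-1}:=\|A_c^{-1}\|+L_t$; $\theta_{\tilde n,1}:=L_g+L_c$, $\theta_{\tilde n,2}:=\|A_u^{-1}\|((\|A_c\|+L_r)^{\tilde n}+L_g+L_u)$, $\theta_{\tilde n,3}:=L_{-1}^{\tilde n}(\|A_s\|(1+L_{-1}L_s)+L_g(1+L_{-1}(1+L_c)))$. $(S_N)$ means: $L_c<1$, $L_r\|A_c^{-1}\|<1$, $L_r\|A_u^{-1}\|+\|A_c\|\|A_u^{-1}\|<1$, $L_r\|A_c^{-1}\|+\|A_s\|\|A_c^{-1}\|<1$, and $\theta_{\tilde n,i}<1$ for $i=1,2,3$, $0\le\tilde n\le N$. Operator and set. $\Gamma_0$ is the set of $\Lambda=(r,k_u,k_s)\in C^1_b(X_c,X)$ (with $r,k_u,k_s$ the components in $X_c,X_u,X_s$) such that $\Lambda(0)=0$, $D\Lambda(0)=0$, $\|Dr\|_0\le L_r$, $\|Dk_u\|_0\le L_u$, $\|Dk_s\|_0\le L_s$; it is regarded as a subset of the Banach space $C^1_b(X_c,X)$. For a triple with $A_c+r$ a bijection, $\Theta(r,k_u,k_s):=\big(A_ck_c+g_c\circ K-k_c\circ(A_c+r),\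 A_u^{-1}k_u\circ(A_c+r)-A_u^{-1}g_u\circ K,\ A_sk_s\circ(A_c+r)^{-1}+g_s\circ K\circ(A_c+r)^{-1}\big)$. *)

theory Defs
  imports "HOL-Analysis.Analysis"
begin

section \<open>The space X = X_c (+) X_u (+) X_s with the max norm\<close>

datatype ('c, 'u, 's) dsum = DS (pc: 'c) (pu: 'u) (ps: 's)

instantiation dsum :: (ab_group_add, ab_group_add, ab_group_add) ab_group_add
begin
definition "0 = DS 0 0 0"
definition "x + y = DS (pc x + pc y) (pu x + pu y) (ps x + ps y)"
definition "x - y = DS (pc x - pc y) (pu x - pu y) (ps x - ps y)"
definition "- x = DS (- pc x) (- pu x) (- ps x)"
instance
  by standard (auto simp: zero_dsum_def plus_dsum_def minus_dsum_def uminus_dsum_def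
      algebra_simps intro: dsum.expand)
end

lemma dsum_zero_sel[simp]: "pc 0 = 0" "pu 0 = 0" "ps 0 = 0"
  by (simp_all add: zero_dsum_def)
lemma dsum_plus_sel[simp]: "pc (x + y) = pc x + pc y" "pu (x + y) = pu x + pu y" "ps (x + y) = ps x + ps y"
  by (simp_all add: plus_dsum_def)
lemma dsum_minus_sel[simp]: "pc (x - y) = pc x - pc y" "pu (x - y) = pu x - pu y" "ps (x - y) = ps x - ps y"
  by (simp_all add: minus_dsum_def)
lemma dsum_uminus_sel[simp]: "pc (- x) = - pc x" "pu (- x) = - pu x" "ps (- x) = - ps x"
  by (simp_all add: uminus_dsum_def)

instantiation dsum :: (real_vector, real_vector, real_vector) real_vector
begin
definition "scaleR a x = DS (a *\<^sub>R pc x) (a *\<^sub>R pu x) (a *\<^sub>R ps x)"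
instance
  by standard (auto simp: scaleR_dsum_def algebra_simps intro: dsum.expand)
end

lemma dsum_scaleR_sel[simp]: "pc (a *\<^sub>R x) = a *\<^sub>R pc x" "pu (a *\<^sub>R x) = a *\<^sub>R pu x"
  "ps (a *\<^sub>R x) = a *\<^sub>R ps x"
  by (simp_all add: scaleR_dsum_def)

instantiation dsum :: (real_normed_vector, real_normed_vector, real_normed_vector) real_normed_vector
begin
definition norm_dsum_def: "norm x = max (norm (pc x)) (max (norm (pu x)) (norm (ps x)))"
definition sgn_dsum_def: "sgn (x :: ('a,'b,'c) dsum) = x /\<^sub>R norm x"
definition dist_dsum_def: "dist (x :: ('a,'b,'c) dsum) y = norm (x - y)"
definition uniformity_dsum_def:
  "(uniformity :: (('a,'b,'c) dsum \<times> ('a,'b,'c) dsum) filter) = (INF e\<in>{0 <..}. principal {(x, y). dist x y < e})"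
definition open_dsum_def:
  "open (U :: ('a,'b,'c) dsum set) \<longleftrightarrow> (\<forall>x\<in>U. \<forall>\<^sub>F (x', y) in uniformity. x' = x \<longrightarrow> y \<in> U)"
instance
proof
  fix x y :: "('a,'b,'c) dsum" and a :: real
  show "norm (x + y) \<le> norm x + norm y"
    unfolding norm_dsum_def using norm_triangle_ineq[of "pc x" "pc y"]
      norm_triangle_ineq[of "pu x" "pu y"] norm_triangle_ineq[of "ps x" "ps y"]
    by (simp add: max_def)
  show "norm (a *\<^sub>R x) = \<bar>a\<bar> * norm x"
    unfolding norm_dsum_def by (simp add: max_mult_distrib_left)
  show "(norm x = 0) = (x = 0)"
    unfolding norm_dsum_def zero_dsum_def
    by (cases x) (auto simp: max_def)
qed (simp_all add: sgn_dsum_def dist_dsum_def uniformity_dsum_def open_dsum_def)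
end

lemma norm_pc_le: "norm (pc x) \<le> norm x" and norm_pu_le: "norm (pu x) \<le> norm x"
  and norm_ps_le: "norm (ps x) \<le> norm x"
  by (simp_all add: norm_dsum_def)

instance dsum :: (banach, banach, banach) banach
proof
  fix X :: "nat \<Rightarrow> ('a,'b,'c) dsum"
  assume C: "Cauchy X"
  have Cc: "Cauchy (\<lambda>n. pc (X n))" "Cauchy (\<lambda>n. pu (X n))" "Cauchy (\<lambda>n. ps (X n))"
    using C unfolding Cauchy_def dist_norm
    by (metis (no_types, lifting) dsum_minus_sel le_less_trans norm_pc_le norm_pu_le norm_ps_le)+
  then obtain a b c where ab: "(\<lambda>n. pc (X n)) \<longlonglongrightarrow> a" "(\<lambda>n. pu (X n)) \<longlonglongrightarrow> b"
    "(\<lambda>n. ps (X n)) \<longlonglongrightarrow> c"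
    by (meson Cauchy_convergent_iff convergent_def)
  have "X \<longlonglongrightarrow> DS a b c"
  proof (rule LIMSEQ_I)
    fix r :: real assume "0 < r"
    from ab obtain N1 N2 N3 where
      "\<forall>n\<ge>N1. norm (pc (X n) - a) < r" "\<forall>n\<ge>N2. norm (pu (X n) - b) < r"
      "\<forall>n\<ge>N3. norm (ps (X n) - c) < r"
      using \<open>0 < r\<close> by (meson LIMSEQ_D)
    then show "\<exists>no. \<forall>n\<ge>no. norm (X n - DS a b c) < r"
      by (intro exI[of _ "max N1 (max N2 N3)"]) (auto simp: norm_dsum_def)
  qed
  then show "convergent X" by (auto simp: convergent_def)
qed


section \<open>Bounded C^k maps: C^k_b(Y,Z)\<close>

text \<open>The j-th derivative D^j f(y) is represented as a function on lists of length j
  (a bounded j-multilinear map); its operator norm is the multilinear operator norm.\<close>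

definition mlnorm :: "nat \<Rightarrow> ('a::real_normed_vector list \<Rightarrow> 'b::real_normed_vector) \<Rightarrow> real" where
  "mlnorm j M = Sup {norm (M hs) | hs. length hs = j \<and> (\<forall>h\<in>set hs. norm h \<le> 1)}"

definition bounded_multilinear ::
  "nat \<Rightarrow> ('a::real_normed_vector list \<Rightarrow> 'b::real_normed_vector) \<Rightarrow> bool" where
  "bounded_multilinear j M \<longleftrightarrow>
     (\<forall>hs i. length hs = j \<and> i < j \<longrightarrow> linear (\<lambda>h. M (hs[i := h]))) \<and>
     (\<exists>B. \<forall>hs. length hs = j \<longrightarrow> norm (M hs) \<le> B * prod_list (map norm hs))"

text \<open>D is a witness that f is C^k with bounded derivatives up to order k:
  D j y is D^j f(y); D^(j+1) f is the Frechet derivative of D^j f w.r.t. the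
  multilinear operator norm; D^k f is continuous; all sup-norms are finite.\<close>

definition Ckb_wit :: "nat \<Rightarrow> ('a::real_normed_vector \<Rightarrow> 'b::real_normed_vector)
    \<Rightarrow> (nat \<Rightarrow> 'a \<Rightarrow> 'a list \<Rightarrow> 'b) \<Rightarrow> bool" where
  "Ckb_wit k f D \<longleftrightarrow>
     (\<forall>x. D 0 x [] = f x) \<and>
     (\<forall>j\<le>k. \<forall>x. bounded_multilinear j (D j x)) \<and>
     (\<forall>j<k. \<forall>x. \<forall>e>0. \<exists>d>0. \<forall>h. norm h < d \<longrightarrow>
        mlnorm j (\<lambda>hs. D j (x + h) hs - D j x hs - D (Suc j) x (h # hs)) \<le> e * norm h) \<and>
     (\<forall>x. \<forall>e>0. \<exists>d>0. \<forall>y. norm (y - x) < d \<longrightarrow> mlnorm k (\<lambda>hs. D k y hs - D k x hs) < e) \<and>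
     (\<forall>j\<le>k. bdd_above (range (\<lambda>y. mlnorm j (D j y))))"

definition Ckb :: "nat \<Rightarrow> ('a::real_normed_vector \<Rightarrow> 'b::real_normed_vector) \<Rightarrow> bool" where
  "Ckb k f \<longleftrightarrow> (\<exists>D. Ckb_wit k f D)"

text \<open>The derivatives (unique on the relevant lists of length j).\<close>
definition Dw :: "nat \<Rightarrow> ('a::real_normed_vector \<Rightarrow> 'b::real_normed_vector)
    \<Rightarrow> nat \<Rightarrow> 'a \<Rightarrow> 'a list \<Rightarrow> 'b" where
  "Dw k f = (SOME D. Ckb_wit k f D)"

definition Ckb_norm :: "nat \<Rightarrow> ('a::real_normed_vector \<Rightarrow> 'b::real_normed_vector) \<Rightarrow> real" where
  "Ckb_norm k f = Max ((\<lambda>j. SUP y. mlnorm j (Dw k f j y)) ` {..k})"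

definition Dsup :: "('a::real_normed_vector \<Rightarrow> 'b::real_normed_vector) \<Rightarrow> real" where
  "Dsup f = (SUP y. mlnorm 1 (Dw 1 f 1 y))"

definition D_zero_at0 :: "('a::real_normed_vector \<Rightarrow> 'b::real_normed_vector) \<Rightarrow> bool" where
  "D_zero_at0 f \<longleftrightarrow> (\<forall>h. Dw 1 f 1 0 [h] = 0)"

text \<open>Closedness of a subset of the Banach space C^1_b(Y,Z) (sequential characterisation
  in the metric induced by ||.||_1).\<close>
definition C1b_closed :: "('a::real_normed_vector \<Rightarrow> 'b::real_normed_vector) set \<Rightarrow> bool" where
  "C1b_closed S \<longleftrightarrow>
     (\<forall>F \<Lambda>. (\<forall>m. F m \<in> S) \<and> Ckb 1 \<Lambda> \<and> (\<lambda>m. Ckb_norm 1 (\<lambda>x. F m x - \<Lambda> x)) \<longlonglongrightarrow> 0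
        \<longrightarrow> \<Lambda> \<in> S)"

text \<open>Arguments: nAc = ||A_c||, nAci = ||A_c^{-1}||, nAui = ||A_u^{-1}||, nAs = ||A_s||.\<close>

definition L_r :: "real \<Rightarrow> real \<Rightarrow> real \<Rightarrow> real" where
  "L_r nAc Lg Lc = (Lg + Lc * (2 * nAc + Lg)) / (1 - Lc)"

definition L_t :: "real \<Rightarrow> real \<Rightarrow> real \<Rightarrow> real \<Rightarrow> real" where
  "L_t nAc nAci Lg Lc = nAci^2 * L_r nAc Lg Lc / (1 - nAci * L_r nAc Lg Lc)"

definition L_u :: "real \<Rightarrow> real \<Rightarrow> real \<Rightarrow> real \<Rightarrow> real" where
  "L_u nAc nAui Lg Lc = nAui * (1 + Lc) * Lg / (1 - L_r nAc Lg Lc * nAui - nAc * nAui)"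

definition L_s :: "real \<Rightarrow> real \<Rightarrow> real \<Rightarrow> real \<Rightarrow> real \<Rightarrow> real" where
  "L_s nAc nAci nAs Lg Lc = nAci * (1 + Lc) * Lg / (1 - L_r nAc Lg Lc * nAci - nAs * nAci)"

definition L_m1 :: "real \<Rightarrow> real \<Rightarrow> real \<Rightarrow> real \<Rightarrow> real" where
  "L_m1 nAc nAci Lg Lc = nAci + L_t nAc nAci Lg Lc"

definition theta1 :: "nat \<Rightarrow> real \<Rightarrow> real \<Rightarrow> real" where
  "theta1 m Lg Lc = Lg + Lc"

definition theta2 :: "nat \<Rightarrow> real \<Rightarrow> real \<Rightarrow> real \<Rightarrow> real \<Rightarrow> real" where
  "theta2 m nAc nAui Lg Lc = nAui * ((nAc + L_r nAc Lg Lc)^m + Lg + L_u nAc nAui Lg Lc)"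

definition theta3 :: "nat \<Rightarrow> real \<Rightarrow> real \<Rightarrow> real \<Rightarrow> real \<Rightarrow> real \<Rightarrow> real" where
  "theta3 m nAc nAci nAs Lg Lc =
     L_m1 nAc nAci Lg Lc ^ m * (nAs * (1 + L_m1 nAc nAci Lg Lc * L_s nAc nAci nAs Lg Lc)
       + Lg * (1 + L_m1 nAc nAci Lg Lc * (1 + Lc)))"

definition S_cond :: "nat \<Rightarrow> real \<Rightarrow> real \<Rightarrow> real \<Rightarrow> real \<Rightarrow> real \<Rightarrow> real \<Rightarrow> bool" where
  "S_cond N nAc nAci nAui nAs Lg Lc \<longleftrightarrow>
     Lc < 1 \<and> L_r nAc Lg Lc * nAci < 1 \<and>
     L_r nAc Lg Lc * nAui + nAc * nAui < 1 \<and>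
     L_r nAc Lg Lc * nAci + nAs * nAci < 1 \<and>
     (\<forall>m\<le>N. theta1 m Lg Lc < 1 \<and> theta2 m nAc nAui Lg Lc < 1 \<and>
              theta3 m nAc nAci nAs Lg Lc < 1)"

definition Gamma0 :: "real \<Rightarrow> real \<Rightarrow> real \<Rightarrow> ('c::real_normed_vector \<Rightarrow>
     ('c, 'u::real_normed_vector, 's::real_normed_vector) dsum) set" where
  "Gamma0 Lr Lu Ls = {\<Lambda>. Ckb 1 \<Lambda> \<and> \<Lambda> 0 = 0 \<and> D_zero_at0 \<Lambda> \<and>
      Dsup (\<lambda>x. pc (\<Lambda> x)) \<le> Lr \<and> Dsup (\<lambda>x. pu (\<Lambda> x)) \<le> Lu \<and> Dsup (\<lambda>x. ps (\<Lambda> x)) \<le> Ls}"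

definition Kmap :: "('c::real_vector \<Rightarrow> 'c) \<Rightarrow> ('c \<Rightarrow> 'u) \<Rightarrow> ('c \<Rightarrow> 's) \<Rightarrow> 'c \<Rightarrow> ('c, 'u, 's) dsum" where
  "Kmap kc ku ks x = DS (x + kc x) (ku x) (ks x)"

definition Theta :: "('c::real_vector \<Rightarrow> 'c) \<Rightarrow> ('u::real_vector \<Rightarrow> 'u) \<Rightarrow> ('s::real_vector \<Rightarrow> 's)
     \<Rightarrow> (('c, 'u, 's) dsum \<Rightarrow> ('c, 'u, 's) dsum) \<Rightarrow> ('c \<Rightarrow> 'c)
     \<Rightarrow> ('c \<Rightarrow> ('c, 'u, 's) dsum) \<Rightarrow> ('c \<Rightarrow> ('c, 'u, 's) dsum)" where
  "Theta Ac Aui As g kc \<Lambda> =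
     (let r = (\<lambda>x. pc (\<Lambda> x)); ku = (\<lambda>x. pu (\<Lambda> x)); ks = (\<lambda>x. ps (\<Lambda> x));
          K = Kmap kc ku ks; \<Phi> = (\<lambda>x. Ac x + r x); \<Phi>i = inv \<Phi>
      in (\<lambda>x. DS (Ac (kc x) + pc (g (K x)) - kc (\<Phi> x))
                 (Aui (ku (\<Phi> x)) - Aui (pu (g (K x))))
                 (As (ks (\<Phi>i x)) + ps (g (K (\<Phi>i x))))))"


definition Gamma0_of :: "('c::banach \<Rightarrow>\<^sub>L 'c) \<Rightarrow> ('c \<Rightarrow>\<^sub>L 'c) \<Rightarrow> ('u::banach \<Rightarrow>\<^sub>L 'u)
     \<Rightarrow> ('s::banach \<Rightarrow>\<^sub>L 's) \<Rightarrow> real \<Rightarrow> real \<Rightarrow> ('c \<Rightarrow> ('c, 'u, 's) dsum) set" where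
  "Gamma0_of Ac Aci Aui As Lg Lc =
     Gamma0 (L_r (norm Ac) Lg Lc) (L_u (norm Ac) (norm Aui) Lg Lc)
            (L_s (norm Ac) (norm Aci) (norm As) Lg Lc)"

end

theory Submission
  imports Defs
begin

lemma mlnorm0: "mlnorm 0 M = norm (M [])"
  unfolding mlnorm_def by simp

lemma mlnorm1_set: "{norm (M hs) | hs. length hs = 1 \<and> (\<forall>h\<in>set hs. norm h \<le> 1)}
   = (\<lambda>h. norm (M [h])) ` {h. norm h \<le> 1}"
  by (auto simp: length_Suc_conv)

lemma mlnorm1_le: "(\<And>h. norm h \<le> 1 \<Longrightarrow> norm (M [h]) \<le> X) \<Longrightarrow> mlnorm 1 M \<le> X"
  unfolding mlnorm_def mlnorm1_set
  by (rule cSup_least) (auto intro!: exI[of _ 0])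

lemma mlnorm1_ge: "(\<And>h. norm h \<le> 1 \<Longrightarrow> norm (M [h]) \<le> B) \<Longrightarrow> norm h \<le> 1 \<Longrightarrow> norm (M [h]) \<le> mlnorm 1 M"
  unfolding mlnorm_def mlnorm1_set
  by (rule cSup_upper) (auto intro!: bdd_aboveI)

lemma mlnorm1_blinfun:
  fixes T :: "'a::real_normed_vector \<Rightarrow>\<^sub>L 'b::real_normed_vector"
  assumes "\<And>h. M [h] = blinfun_apply T h"
  shows "mlnorm 1 M = norm T"
proof (rule antisym)
  show "mlnorm 1 M \<le> norm T"
    by (rule mlnorm1_le) (metis assms mult.commute mult_left_le norm_blinfun norm_ge_zero order_trans)
  have b: "\<And>h. norm h \<le> 1 \<Longrightarrow> norm (M [h]) \<le> norm T"
    by (metis assms mult.commute mult_left_le norm_blinfun norm_ge_zero order_trans)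
  have ge0: "0 \<le> mlnorm 1 M"
  proof -
    have "norm (M [0]) \<le> mlnorm 1 M" by (rule mlnorm1_ge[where B="norm T"]) (use b in auto)
    then show ?thesis using norm_ge_zero[of "M [0]"] by linarith
  qed
  show "norm T \<le> mlnorm 1 M"
  proof (rule norm_blinfun_bound[OF ge0])
    fix x :: 'a
    show "norm (T x) \<le> mlnorm 1 M * norm x"
    proof (cases "x = 0")
      case True then show ?thesis by simp
    next
      case False
      have "norm (M [x /\<^sub>R norm x]) \<le> mlnorm 1 M"
        by (rule mlnorm1_ge[where B="norm T"]) (use b False in auto)
      then have "norm (T (x /\<^sub>R norm x)) \<le> mlnorm 1 M" by (simp add: assms)
      moreover have "T x = norm x *\<^sub>R T (x /\<^sub>R norm x)"
        using False by (simp add: blinfun.scaleR_right)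
      ultimately show ?thesis using False
        by (simp add: mult.commute mult_left_mono)
    qed
  qed
qed


definition D1 :: "('a::real_normed_vector \<Rightarrow> 'b::real_normed_vector) \<Rightarrow> ('a \<Rightarrow> 'a \<Rightarrow>\<^sub>L 'b) \<Rightarrow> bool" where
  "D1 f f' \<longleftrightarrow> (\<forall>x. (f has_derivative blinfun_apply (f' x)) (at x)) \<and> continuous_on UNIV f' \<and> bounded (range f')"

definition C1 :: "('a::real_normed_vector \<Rightarrow> 'b::real_normed_vector) \<Rightarrow> ('a \<Rightarrow> 'a \<Rightarrow>\<^sub>L 'b) \<Rightarrow> bool" where
  "C1 f f' \<longleftrightarrow> D1 f f' \<and> bounded (range f)"

lemma bml1:
  assumes "bounded_multilinear 1 M"
  shows "bounded_linear (\<lambda>h. M [h])"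
proof -
  have "\<forall>hs i. length hs = 1 \<and> i < 1 \<longrightarrow> linear (\<lambda>h. M (hs[i := h]))"
    using assms unfolding bounded_multilinear_def by blast
  from this[rule_format, of "[0]" 0] have lin: "linear (\<lambda>h. M ([0][0 := h]))" by simp
  then have lin': "linear (\<lambda>h. M [h])" by simp
  obtain B where B: "\<And>hs. length hs = 1 \<Longrightarrow> norm (M hs) \<le> B * prod_list (map norm hs)"
    using assms unfolding bounded_multilinear_def by blast
  show ?thesis
  proof (rule bounded_linear_intro[where K=B])
    show "M [x + y] = M [x] + M [y]" for x y using linear_add[OF lin'] by simp
    show "M [r *\<^sub>R x] = r *\<^sub>R M [x]" for r x using linear_scale[OF lin'] by simp
    show "norm (M [x]) \<le> norm x * B" for x using B[of "[x]"] by (simp add: mult.commute)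
  qed
qed

lemma bml2:
  assumes "bounded_multilinear 2 M"
  shows "\<exists>B\<ge>0. \<forall>h. bounded_linear (\<lambda>v. M [h, v]) \<and> (\<forall>v. norm (M [h, v]) \<le> B * norm h * norm v)"
proof -
  obtain B where B: "\<And>hs. length hs = 2 \<Longrightarrow> norm (M hs) \<le> B * prod_list (map norm hs)"
    using assms unfolding bounded_multilinear_def by blast
  have L: "\<forall>hs i. length hs = 2 \<and> i < 2 \<longrightarrow> linear (\<lambda>h. M (hs[i := h]))"
    using assms unfolding bounded_multilinear_def by blast
  have lin: "linear (\<lambda>v. M ([h, 0][1 := v]))" for h using L[rule_format, of "[h, 0]" 1] by simp
  then have lin': "linear (\<lambda>v. M [h, v])" for h by simp
  have Bv: "norm (M [h, v]) \<le> max B 0 * norm h * norm v" for h v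
  proof -
    have "norm (M [h, v]) \<le> B * (norm h * norm v)" using B[of "[h, v]"] by simp
    also have "\<dots> \<le> max B 0 * (norm h * norm v)" by (rule mult_right_mono) auto
    finally show ?thesis by (simp add: mult.assoc)
  qed
  have "bounded_linear (\<lambda>v. M [h, v])" for h
  proof (rule bounded_linear_intro[where K="max B 0 * norm h"])
    show "M [h, x + y] = M [h, x] + M [h, y]" for x y using linear_add[OF lin'] by simp
    show "M [h, r *\<^sub>R x] = r *\<^sub>R M [h, x]" for r x using linear_scale[OF lin'] by simp
    show "norm (M [h, x]) \<le> norm x * (max B 0 * norm h)" for x using Bv[of h x] by (simp add: algebra_simps)
  qed
  then show ?thesis using Bv by (intro exI[of _ "max B 0"]) auto
qed


lemma wit_parts:
  assumes "Ckb_wit k f D"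
  shows wit_0: "D 0 x [] = f x"
    and wit_bml: "j \<le> k \<Longrightarrow> bounded_multilinear j (D j x)"
    and wit_der: "j < k \<Longrightarrow> e > 0 \<Longrightarrow> \<exists>d>0. \<forall>h. norm h < d \<longrightarrow>
        mlnorm j (\<lambda>hs. D j (x + h) hs - D j x hs - D (Suc j) x (h # hs)) \<le> e * norm h"
    and wit_cont: "e > 0 \<Longrightarrow> \<exists>d>0. \<forall>y. norm (y - x) < d \<longrightarrow> mlnorm k (\<lambda>hs. D k y hs - D k x hs) < e"
    and wit_bdd: "j \<le> k \<Longrightarrow> bdd_above (range (\<lambda>y. mlnorm j (D j y)))"
proof -
  note W = assms[unfolded Ckb_wit_def]
  have A: "\<forall>x. D 0 x [] = f x" using W by (elim conjE)
  have B: "\<forall>j\<le>k. \<forall>x. bounded_multilinear j (D j x)" using W by (elim conjE)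
  have C: "\<forall>j<k. \<forall>x. \<forall>e>0. \<exists>d>0. \<forall>h. norm h < d \<longrightarrow>
        mlnorm j (\<lambda>hs. D j (x + h) hs - D j x hs - D (Suc j) x (h # hs)) \<le> e * norm h"
    using W by (elim conjE)
  have E: "\<forall>x. \<forall>e>0. \<exists>d>0. \<forall>y. norm (y - x) < d \<longrightarrow> mlnorm k (\<lambda>hs. D k y hs - D k x hs) < e"
    using W by (elim conjE)
  have F: "\<forall>j\<le>k. bdd_above (range (\<lambda>y. mlnorm j (D j y)))" using W by (elim conjE)
  show "D 0 x [] = f x" using A by simp
  show "j \<le> k \<Longrightarrow> bounded_multilinear j (D j x)" using B by simp
  show "j < k \<Longrightarrow> e > 0 \<Longrightarrow> \<exists>d>0. \<forall>h. norm h < d \<longrightarrow>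
        mlnorm j (\<lambda>hs. D j (x + h) hs - D j x hs - D (Suc j) x (h # hs)) \<le> e * norm h"
    using C by simp
  show "e > 0 \<Longrightarrow> \<exists>d>0. \<forall>y. norm (y - x) < d \<longrightarrow> mlnorm k (\<lambda>hs. D k y hs - D k x hs) < e"
    using E by simp
  show "j \<le> k \<Longrightarrow> bdd_above (range (\<lambda>y. mlnorm j (D j y)))" using F by simp
qed

lemma wit_bl: "Ckb_wit k f D \<Longrightarrow> 1 \<le> k \<Longrightarrow> bounded_linear (\<lambda>h. D 1 x [h])"
  by (intro bml1 wit_bml)

lemma wit_C1:
  assumes W: "Ckb_wit 1 f D"
  shows "C1 f (\<lambda>x. Blinfun (\<lambda>h. D 1 x [h]))"
proof -
  let ?f' = "\<lambda>x. Blinfun (\<lambda>h. D 1 x [h])"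
  have bl: "bounded_linear (\<lambda>h. D 1 x [h])" for x using wit_bl[OF W] by simp
  have app: "blinfun_apply (?f' x) h = D 1 x [h]" for x h by (subst bounded_linear_Blinfun_apply[OF bl]) (rule refl)
  have D0: "D 0 x [] = f x" for x using wit_0[OF W] .
  have der: "(f has_derivative blinfun_apply (?f' x)) (at x)" for x
    unfolding has_derivative_at_alt
  proof (intro conjI allI impI)
    show "bounded_linear (blinfun_apply (?f' x))" by (rule blinfun.bounded_linear_right)
    fix e :: real assume e: "0 < e"
    from wit_der[OF W, of 0 e x] e obtain d where d: "d > 0" "\<And>h. norm h < d \<Longrightarrow>
        mlnorm 0 (\<lambda>hs. D 0 (x + h) hs - D 0 x hs - D (Suc 0) x (h # hs)) \<le> e * norm h"
      by auto
    show "\<exists>d>0. \<forall>y. norm (y - x) < d \<longrightarrow> norm (f y - f x - blinfun_apply (?f' x) (y - x)) \<le> e * norm (y - x)"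
    proof (intro exI[of _ d] conjI allI impI)
      fix y assume "norm (y - x) < d"
      from d(2)[OF this] show "norm (f y - f x - blinfun_apply (?f' x) (y - x)) \<le> e * norm (y - x)"
        by (simp add: mlnorm0 D0 app[unfolded One_nat_def])
    qed (use d in auto)
  qed
  have cont: "continuous_on UNIV ?f'"
    unfolding continuous_on_iff
  proof (intro ballI allI impI)
    fix x :: 'a and e :: real assume "0 < e"
    from wit_cont[OF W this, of x] obtain d where d: "d > 0" "\<And>y. norm (y - x) < d \<Longrightarrow> mlnorm 1 (\<lambda>hs. D 1 y hs - D 1 x hs) < e"
      by blast
    show "\<exists>d>0. \<forall>x'\<in>UNIV. dist x' x < d \<longrightarrow> dist (?f' x') (?f' x) < e"
    proof (intro exI[of _ d] conjI ballI impI)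
      fix y assume "dist y x < d"
      then have "mlnorm 1 (\<lambda>hs. D 1 y hs - D 1 x hs) < e" using d by (simp add: dist_norm)
      moreover have "mlnorm 1 (\<lambda>hs. D 1 y hs - D 1 x hs) = norm (?f' y - ?f' x)"
        by (rule mlnorm1_blinfun) (simp add: app[unfolded One_nat_def] blinfun.diff_left)
      ultimately show "dist (?f' y) (?f' x) < e" by (simp add: dist_norm)
    qed (use d in auto)
  qed
  have bdd: "bdd_above (range (\<lambda>y. mlnorm j (D j y)))" if "j \<le> 1" for j
    using wit_bdd[OF W that] .
  have b0: "bounded (range f)"
  proof -
    from bdd[of 0] obtain M where "\<And>y. mlnorm 0 (D 0 y) \<le> M" by (auto simp: bdd_above_def)
    then show ?thesis unfolding bounded_iff by (auto simp: mlnorm0 D0)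
  qed
  have b1: "bounded (range ?f')"
  proof -
    from bdd[of 1] obtain M where M: "\<And>y. mlnorm 1 (D 1 y) \<le> M" by (auto simp: bdd_above_def)
    have "mlnorm 1 (D 1 y) = norm (?f' y)" for y by (rule mlnorm1_blinfun) (simp add: app[unfolded One_nat_def])
    then show ?thesis unfolding bounded_iff using M by auto
  qed
  show ?thesis unfolding C1_def D1_def using der cont b0 b1 by blast
qed


lemma C1_Ckb:
  assumes C: "C1 f f'"
  shows "Ckb 1 f"
proof -
  define D where "D = (\<lambda>(j::nat) x hs. if j = 0 then f x else blinfun_apply (f' x) (hd hs))"
  have der: "\<And>x. (f has_derivative blinfun_apply (f' x)) (at x)" and cont: "continuous_on UNIV f'"
    and bf: "bounded (range f)" and bf': "bounded (range f')"
    using C unfolding C1_def D1_def by auto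
  from bf obtain Bf where Bf: "\<And>x. norm (f x) \<le> Bf" unfolding bounded_iff by auto
  from bf' obtain Bf' where Bf': "\<And>x. norm (f' x) \<le> Bf'" unfolding bounded_iff by auto
  have m1: "mlnorm 1 (\<lambda>hs. D 1 y hs - D 1 x hs) = norm (f' y - f' x)" for x y
    by (rule mlnorm1_blinfun) (simp add: D_def blinfun.diff_left)
  have m1': "mlnorm 1 (D 1 y) = norm (f' y)" for y
    by (rule mlnorm1_blinfun) (simp add: D_def)
  have "Ckb_wit 1 f D"
    unfolding Ckb_wit_def
  proof (intro conjI allI impI)
    show "D 0 x [] = f x" for x by (simp add: D_def)
  next
    fix j x assume "j \<le> (1::nat)"
    then consider "j = 0" | "j = 1" by linarith
    then show "bounded_multilinear j (D j x)"
    proof cases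
      case 1
      then show ?thesis unfolding bounded_multilinear_def
        by (auto simp: D_def intro!: exI[of _ "norm (f x)"])
    next
      case 2
      have lin: "linear (\<lambda>h. D 1 x ([a][0 := h]))" for a
        by (simp add: D_def blinfun.bounded_linear_right bounded_linear.linear)
      show ?thesis unfolding bounded_multilinear_def 2
      proof (intro conjI allI impI)
        fix hs :: "'a list" and i :: nat assume "length hs = 1 \<and> i < 1"
        then obtain a where "hs = [a]" "i = 0" by (auto simp: length_Suc_conv)
        then show "linear (\<lambda>h. D 1 x (hs[i := h]))" using lin by simp
      next
        show "\<exists>B. \<forall>hs. length hs = 1 \<longrightarrow> norm (D 1 x hs) \<le> B * prod_list (map norm hs)"
          by (intro exI[of _ "norm (f' x)"]) (auto simp: length_Suc_conv D_def norm_blinfun)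
      qed
    qed
  next
    fix j x and e :: real assume j: "j < (1::nat)" and e: "0 < e"
    then have j0: "j = 0" by simp
    from der[of x] e obtain d where d: "d > 0"
      "\<And>y. norm (y - x) < d \<Longrightarrow> norm (f y - f x - f' x (y - x)) \<le> e * norm (y - x)"
      unfolding has_derivative_at_alt by blast
    show "\<exists>d>0. \<forall>h. norm h < d \<longrightarrow> mlnorm j (\<lambda>hs. D j (x + h) hs - D j x hs - D (Suc j) x (h # hs)) \<le> e * norm h"
    proof (intro exI[of _ d] conjI allI impI)
      fix h :: 'a assume "norm h < d"
      then show "mlnorm j (\<lambda>hs. D j (x + h) hs - D j x hs - D (Suc j) x (h # hs)) \<le> e * norm h"
        using d(2)[of "x + h"] by (simp add: j0 mlnorm0 D_def)
    qed (use d in auto)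
  next
    fix x and e :: real assume e: "0 < e"
    from cont e obtain d where d: "d > 0" "\<And>y. dist y x < d \<Longrightarrow> dist (f' y) (f' x) < e"
      unfolding continuous_on_iff by blast
    show "\<exists>d>0. \<forall>y. norm (y - x) < d \<longrightarrow> mlnorm 1 (\<lambda>hs. D 1 y hs - D 1 x hs) < e"
      using d by (intro exI[of _ d]) (auto simp: m1[unfolded One_nat_def] dist_norm)
  next
    fix j assume "j \<le> (1::nat)"
    then consider "j = 0" | "j = 1" by linarith
    then show "bdd_above (range (\<lambda>y. mlnorm j (D j y)))"
    proof cases
      case 1 then show ?thesis using Bf by (auto simp: mlnorm0 D_def intro!: bdd_aboveI)
    next
      case 2 then show ?thesis using Bf' by (auto simp only: m1' intro!: bdd_aboveI)
    qed
  qed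
  then show ?thesis unfolding Ckb_def by blast
qed

definition dv :: "('a::real_normed_vector \<Rightarrow> 'b::real_normed_vector) \<Rightarrow> 'a \<Rightarrow> 'a \<Rightarrow>\<^sub>L 'b" where
  "dv f x = Blinfun (\<lambda>h. Dw 1 f 1 x [h])"

lemma Ckb_Dw: "Ckb k f \<Longrightarrow> Ckb_wit k f (Dw k f)"
proof -
  assume "Ckb k f"
  then obtain D where "Ckb_wit k f D" unfolding Ckb_def by blast
  then show ?thesis unfolding Dw_def by (rule someI[where P="Ckb_wit k f"])
qed

lemma Ckb1_C1: "Ckb 1 f \<Longrightarrow> C1 f (dv f)"
  unfolding dv_def by (rule wit_C1[OF Ckb_Dw])

lemma Dw1_app: "Ckb 1 f \<Longrightarrow> Dw 1 f 1 x [h] = blinfun_apply (dv f x) h"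
proof -
  assume a: "Ckb 1 f"
  have "bounded_linear (\<lambda>h. Dw 1 f 1 x [h])" by (rule wit_bl[OF Ckb_Dw[OF a]]) simp
  then show ?thesis unfolding dv_def by (subst bounded_linear_Blinfun_apply) auto
qed

lemma Dw0_app: "Ckb 1 f \<Longrightarrow> Dw 1 f 0 x [] = f x"
  using wit_0[OF Ckb_Dw] by blast

lemma dv_unique: assumes "C1 f f'" shows "dv f = f'"
proof
  fix x
  have "(f has_derivative blinfun_apply (dv f x)) (at x)"
    using Ckb1_C1[OF C1_Ckb[OF assms]] unfolding C1_def D1_def by blast
  moreover have "(f has_derivative blinfun_apply (f' x)) (at x)"
    using assms unfolding C1_def D1_def by blast
  ultimately show "dv f x = f' x"
    using has_derivative_unique blinfun_apply_inject by metis
qed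

lemmas Dw1_app' = Dw1_app[unfolded One_nat_def]

lemma mlnorm_Dw1: "Ckb 1 f \<Longrightarrow> mlnorm 1 (Dw 1 f 1 x) = norm (dv f x)"
  by (rule mlnorm1_blinfun) (simp add: Dw1_app')

lemmas mlnorm_Dw1' = mlnorm_Dw1[unfolded One_nat_def]

lemma Dsup_eq: "Ckb 1 f \<Longrightarrow> Dsup f = (SUP x. norm (dv f x))"
  unfolding Dsup_def by (simp add: mlnorm_Dw1')

lemma bdd_dv: "Ckb 1 f \<Longrightarrow> bdd_above (range (\<lambda>x. norm (dv f x)))"
proof -
  assume "Ckb 1 f"
  then have "bounded (range (dv f))" using Ckb1_C1 unfolding C1_def D1_def by blast
  then obtain B where "\<And>x. norm (dv f x) \<le> B" unfolding bounded_iff by auto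
  then show ?thesis by (auto intro!: bdd_aboveI)
qed

lemma Dsup_le: "Ckb 1 f \<Longrightarrow> Dsup f \<le> L \<Longrightarrow> norm (dv f x) \<le> L"
proof -
  assume a: "Ckb 1 f" "Dsup f \<le> L"
  have "norm (dv f x) \<le> (SUP x. norm (dv f x))" by (rule cSUP_upper[OF UNIV_I bdd_dv[OF a(1)]])
  then show ?thesis using a by (simp add: Dsup_eq)
qed

lemma le_Dsup: "Ckb 1 f \<Longrightarrow> (\<And>x. norm (dv f x) \<le> L) \<Longrightarrow> Dsup f \<le> L"
  by (simp add: Dsup_eq cSUP_least)

lemma Dzero_iff: "Ckb 1 f \<Longrightarrow> D_zero_at0 f \<longleftrightarrow> dv f 0 = 0"
  unfolding D_zero_at0_def by (auto simp: Dw1_app' intro: blinfun_eqI)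

lemma Ckb_norm_ge:
  assumes "Ckb 1 f"
  shows "norm (f y) \<le> Ckb_norm 1 f" "norm (dv f y) \<le> Ckb_norm 1 f"
proof -
  have bf: "bounded (range f)" using Ckb1_C1[OF assms] unfolding C1_def by blast
  then obtain B where B: "\<And>x. norm (f x) \<le> B" unfolding bounded_iff by auto
  have e0: "(SUP y. mlnorm 0 (Dw 1 f 0 y)) = (SUP y. norm (f y))"
    using Dw0_app[OF assms] by (simp add: mlnorm0)
  have e1: "(SUP y. mlnorm 1 (Dw 1 f 1 y)) = (SUP y. norm (dv f y))"
    using mlnorm_Dw1[OF assms] by simp
  have M: "Ckb_norm 1 f = max (SUP y. norm (f y)) (SUP y. norm (dv f y))"
    unfolding Ckb_norm_def using e0 e1 by (simp add: atMost_Suc)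
  have "norm (f y) \<le> (SUP y. norm (f y))"
    by (rule cSUP_upper) (use B in \<open>auto intro!: bdd_aboveI\<close>)
  then show "norm (f y) \<le> Ckb_norm 1 f" unfolding M by linarith
  have "norm (dv f y) \<le> (SUP y. norm (dv f y))"
    by (rule cSUP_upper[OF UNIV_I bdd_dv[OF assms]])
  then show "norm (dv f y) \<le> Ckb_norm 1 f" unfolding M by linarith
qed


lemma Ckb_mono:
  assumes "Ckb k f" "1 \<le> k"
  shows "Ckb 1 f"
proof (cases "k = 1")
  case True then show ?thesis using assms by simp
next
  case False
  with assms have k2: "2 \<le> k" by simp
  from assms obtain D where W: "Ckb_wit k f D" unfolding Ckb_def by blast
  define P where "P y = Blinfun (\<lambda>v. D 1 y [v])" for y
  have blP: "bounded_linear (\<lambda>v. D 1 y [v])" for y using wit_bl[OF W] assms(2) by simp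
  have Papp: "blinfun_apply (P y) v = D 1 y [v]" for y v
    unfolding P_def by (subst bounded_linear_Blinfun_apply[OF blP]) (rule refl)
  have cont1: "\<exists>d>0. \<forall>y. norm (y - x) < d \<longrightarrow> mlnorm 1 (\<lambda>hs. D 1 y hs - D 1 x hs) < e"
    if e: "e > 0" for x e
  proof -
    from bml2[OF wit_bml[OF W k2]] obtain B where B: "B \<ge> 0"
      "\<And>h. bounded_linear (\<lambda>v. D 2 x [h, v])" "\<And>h v. norm (D 2 x [h, v]) \<le> B * norm h * norm v"
      by blast
    define Q where "Q h = Blinfun (\<lambda>v. D 2 x [h, v])" for h
    have Qapp: "blinfun_apply (Q h) v = D 2 x [h, v]" for h v
      unfolding Q_def by (subst bounded_linear_Blinfun_apply[OF B(2)]) (rule refl)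
    have nQ: "norm (Q h) \<le> B * norm h" for h
      by (rule norm_blinfun_bound) (use B in \<open>auto simp: Qapp\<close>)
    from wit_der[OF W, of 1 1 x] k2 obtain d where d: "d > 0" "\<And>h. norm h < d \<Longrightarrow>
        mlnorm 1 (\<lambda>hs. D 1 (x + h) hs - D 1 x hs - D (Suc 1) x (h # hs)) \<le> 1 * norm h"
      by auto
    have key: "norm (P y - P x) \<le> (1 + B) * norm (y - x)" if y: "norm (y - x) < d" for y
    proof -
      let ?h = "y - x"
      have "mlnorm 1 (\<lambda>hs. D 1 (x + ?h) hs - D 1 x hs - D (Suc 1) x (?h # hs)) = norm (P y - P x - Q ?h)"
        by (rule mlnorm1_blinfun) (simp add: Papp Qapp blinfun.diff_left numeral_2_eq_2)
      then have "norm (P y - P x - Q ?h) \<le> norm ?h" using d(2)[OF y] by simp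
      then have "norm (P y - P x) \<le> norm ?h + norm (Q ?h)" using norm_triangle_ineq[of "P y - P x - Q ?h" "Q ?h"] by simp
      then show ?thesis using nQ[of ?h] by (simp add: algebra_simps)
    qed
    show ?thesis
    proof (intro exI[of _ "min d (e / (1 + B))"] conjI allI impI)
      show "0 < min d (e / (1 + B))" using d e B by simp
      fix y assume y: "norm (y - x) < min d (e / (1 + B))"
      have "mlnorm 1 (\<lambda>hs. D 1 y hs - D 1 x hs) = norm (P y - P x)"
        by (rule mlnorm1_blinfun) (simp add: Papp blinfun.diff_left)
      also have "\<dots> \<le> (1 + B) * norm (y - x)" using key y by simp
      also have "\<dots> < (1 + B) * (e / (1 + B))" using y B by (intro mult_strict_left_mono) auto
      also have "\<dots> = e" using B by simp
      finally show "mlnorm 1 (\<lambda>hs. D 1 y hs - D 1 x hs) < e" .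
    qed
  qed
  have "Ckb_wit 1 f D"
    unfolding Ckb_wit_def
  proof (intro conjI allI impI)
    show "D 0 x [] = f x" for x by (rule wit_0[OF W])
    show "bounded_multilinear j (D j x)" if "j \<le> 1" for j x using wit_bml[OF W] that k2 by simp
    show "\<exists>d>0. \<forall>h. norm h < d \<longrightarrow> mlnorm j (\<lambda>hs. D j (x + h) hs - D j x hs - D (Suc j) x (h # hs)) \<le> e * norm h"
      if "j < 1" "0 < e" for j x e using wit_der[OF W] that k2 by simp
    show "\<exists>d>0. \<forall>y. norm (y - x) < d \<longrightarrow> mlnorm 1 (\<lambda>hs. D 1 y hs - D 1 x hs) < e" if "0 < e" for x e
      using cont1 that by blast
    show "bdd_above (range (\<lambda>y. mlnorm j (D j y)))" if "j \<le> 1" for j using wit_bdd[OF W] that k2 by simp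
  qed
  then show ?thesis unfolding Ckb_def by blast
qed


lemma bounded_range_iff: "bounded (range f) \<longleftrightarrow> (\<exists>B. \<forall>x. norm (f x) \<le> B)"
  unfolding bounded_iff by auto

lemma D1_cont: "D1 f f' \<Longrightarrow> continuous_on UNIV f"
  unfolding D1_def by (meson continuous_at_imp_continuous_on has_derivative_continuous)

lemma bounded_range_add:
  fixes f g :: "'a \<Rightarrow> 'b::real_normed_vector"
  shows "bounded (range f) \<Longrightarrow> bounded (range g) \<Longrightarrow> bounded (range (\<lambda>x. f x + g x))"
  unfolding bounded_range_iff
proof -
  assume "\<exists>B. \<forall>x. norm (f x) \<le> B" "\<exists>B. \<forall>x. norm (g x) \<le> B"
  then obtain B1 B2 where "\<And>x. norm (f x) \<le> B1" "\<And>x. norm (g x) \<le> B2" by blast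
  then show "\<exists>B. \<forall>x. norm (f x + g x) \<le> B"
    by (intro exI[of _ "B1 + B2"] allI order_trans[OF norm_triangle_ineq] add_mono)
qed
lemma bounded_range_diff:
  fixes f g :: "'a \<Rightarrow> 'b::real_normed_vector"
  shows "bounded (range f) \<Longrightarrow> bounded (range g) \<Longrightarrow> bounded (range (\<lambda>x. f x - g x))"
  unfolding bounded_range_iff
proof -
  assume "\<exists>B. \<forall>x. norm (f x) \<le> B" "\<exists>B. \<forall>x. norm (g x) \<le> B"
  then obtain B1 B2 where "\<And>x. norm (f x) \<le> B1" "\<And>x. norm (g x) \<le> B2" by blast
  then show "\<exists>B. \<forall>x. norm (f x - g x) \<le> B"
    by (intro exI[of _ "B1 + B2"] allI order_trans[OF norm_triangle_ineq4] add_mono)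
qed
lemma bounded_range_blin:
  fixes f :: "'a \<Rightarrow> 'b::real_normed_vector"
  shows "bounded (range f) \<Longrightarrow> bounded (range (\<lambda>x. blinfun_apply T (f x)))"
  unfolding bounded_range_iff
proof -
  assume "\<exists>B. \<forall>x. norm (f x) \<le> B"
  then obtain B where B: "\<And>x. norm (f x) \<le> B" by blast
  show "\<exists>B. \<forall>x. norm (T (f x)) \<le> B"
    by (intro exI[of _ "norm T * B"] allI order_trans[OF norm_blinfun] mult_left_mono B) simp
qed
lemma bounded_range_comp: "bounded (range g) \<Longrightarrow> bounded (range (\<lambda>x. g (f x)))"
  by (rule bounded_subset) auto

lemma compose_fun: "blinfun_apply (T o\<^sub>L S) = (\<lambda>v. blinfun_apply T (blinfun_apply S v))"
  by (rule ext) simp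

lemma compose_id_right[simp]: "T o\<^sub>L id_blinfun = T"
  by (rule blinfun_eqI) simp

lemma D1_add: "D1 f f' \<Longrightarrow> D1 g g' \<Longrightarrow> D1 (\<lambda>x. f x + g x) (\<lambda>x. f' x + g' x)"
  unfolding D1_def
  apply (intro conjI allI)
  subgoal by (auto intro!: derivative_eq_intros simp: blinfun.add_left)
  subgoal by (auto intro!: continuous_intros)
  subgoal by (auto intro!: bounded_range_add)
  done

lemma D1_diff: "D1 f f' \<Longrightarrow> D1 g g' \<Longrightarrow> D1 (\<lambda>x. f x - g x) (\<lambda>x. f' x - g' x)"
  unfolding D1_def
  apply (intro conjI allI)
  subgoal by (auto intro!: derivative_eq_intros simp: blinfun.diff_left)
  subgoal by (auto intro!: continuous_intros)
  subgoal by (auto intro!: bounded_range_diff)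
  done

lemma D1_blin: "D1 f f' \<Longrightarrow> D1 (\<lambda>x. blinfun_apply T (f x)) (\<lambda>x. T o\<^sub>L f' x)"
  unfolding D1_def bounded_range_iff
proof (intro conjI allI)
  assume a: "(\<forall>x. (f has_derivative blinfun_apply (f' x)) (at x)) \<and> continuous_on UNIV f' \<and> (\<exists>B. \<forall>x. norm (f' x) \<le> B)"
  show "((\<lambda>x. T (f x)) has_derivative blinfun_apply (T o\<^sub>L f' x)) (at x)" for x
    using blinfun.bounded_linear_right[of T, THEN bounded_linear.has_derivative, OF a[THEN conjunct1, rule_format, of x]]
    by (simp add: o_def compose_fun)
  show "continuous_on UNIV (\<lambda>x. T o\<^sub>L f' x)" using a by (auto intro!: continuous_intros)
  from a obtain B where B: "\<And>x. norm (f' x) \<le> B" by blast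
  show "\<exists>B. \<forall>x. norm (T o\<^sub>L f' x) \<le> B"
    by (intro exI[of _ "norm T * B"] allI order_trans[OF norm_blinfun_compose] mult_left_mono B) simp
qed

lemma D1_comp:
  assumes f: "D1 f f'" and g: "D1 g g'"
  shows "D1 (\<lambda>x. g (f x)) (\<lambda>x. g' (f x) o\<^sub>L f' x)"
proof -
  have df: "\<And>x. (f has_derivative blinfun_apply (f' x)) (at x)" and cf': "continuous_on UNIV f'"
    and bf': "\<exists>B. \<forall>x. norm (f' x) \<le> B" using f unfolding D1_def bounded_range_iff by auto
  have dg: "\<And>x. (g has_derivative blinfun_apply (g' x)) (at x)" and cg': "continuous_on UNIV g'"
    and bg': "\<exists>B. \<forall>x. norm (g' x) \<le> B" using g unfolding D1_def bounded_range_iff by auto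
  have "((\<lambda>x. g (f x)) has_derivative blinfun_apply (g' (f x) o\<^sub>L f' x)) (at x)" for x
    using diff_chain_at[OF df dg] by (simp add: o_def compose_fun)
  moreover have "continuous_on UNIV (\<lambda>x. g' (f x) o\<^sub>L f' x)"
  proof -
    have "continuous_on UNIV (\<lambda>x. g' (f x))"
      using continuous_on_compose[OF D1_cont[OF f], of g'] continuous_on_subset[OF cg'] by (simp add: o_def)
    then show ?thesis using cf' by (auto intro!: continuous_intros)
  qed
  moreover have "\<exists>B. \<forall>x. norm (g' (f x) o\<^sub>L f' x) \<le> B"
  proof -
    from bf' bg' obtain B1 B2 where B1: "\<And>x. norm (f' x) \<le> B1" and B2: "\<And>x. norm (g' x) \<le> B2" by blast
    have "norm (g' (f x) o\<^sub>L f' x) \<le> B2 * B1" for x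
      by (rule order_trans[OF norm_blinfun_compose]) (intro mult_mono B1 B2, auto intro: order_trans[OF norm_ge_zero B2])
    then show ?thesis by blast
  qed
  ultimately show ?thesis unfolding D1_def bounded_range_iff by blast
qed

lemma D1_id: "D1 (\<lambda>x. x) (\<lambda>x. id_blinfun)"
  unfolding D1_def bounded_range_iff by (auto intro: derivative_eq_intros)

lemma D1_lin: "D1 (\<lambda>x. blinfun_apply T x) (\<lambda>x. T)"
  using D1_blin[OF D1_id, of T] by simp


lemma D1_lip:
  assumes "D1 f f'" "\<And>x. norm (f' x) \<le> L"
  shows "norm (f x - f y) \<le> L * norm (x - y)"
proof (rule differentiable_bound[of UNIV f "\<lambda>x. blinfun_apply (f' x)" L x y])
  show "(f has_derivative blinfun_apply (f' z)) (at z within UNIV)" for z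
    using assms(1) unfolding D1_def by simp
  show "onorm (blinfun_apply (f' z)) \<le> L" for z using assms(2)[of z] by (simp add: norm_blinfun.rep_eq)
qed auto

lemma aux_lt: "0 \<le> (q::real) \<Longrightarrow> 0 < e \<Longrightarrow> q * (e / (q + 1)) < e"
  by (simp add: field_simps)

locale invdata =
  fixes Ac Aci :: "'c::banach \<Rightarrow>\<^sub>L 'c"
  assumes inv1: "Aci o\<^sub>L Ac = id_blinfun" and inv2: "Ac o\<^sub>L Aci = id_blinfun"
begin

lemma AciAc[simp]: "Aci (Ac v) = v"
  using arg_cong[OF inv1, of "\<lambda>T. blinfun_apply T v"] by simp
lemma AcAci[simp]: "Ac (Aci v) = v"
  using arg_cong[OF inv2, of "\<lambda>T. blinfun_apply T v"] by simp

lemma perturb_ineq: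
  assumes lip: "\<And>x y. norm (\<psi> x - \<psi> y) \<le> L * norm (x - y)"
  shows "(1 - norm Aci * L) * norm (x - y) \<le> norm Aci * norm ((Ac x + \<psi> x) - (Ac y + \<psi> y))"
proof -
  have "x - y = Aci (((Ac x + \<psi> x) - (Ac y + \<psi> y)) - (\<psi> x - \<psi> y))"
    by (simp add: blinfun.diff_right blinfun.add_right)
  then have "norm (x - y) \<le> norm Aci * norm (((Ac x + \<psi> x) - (Ac y + \<psi> y)) - (\<psi> x - \<psi> y))"
    by (metis norm_blinfun)
  also have "\<dots> \<le> norm Aci * (norm ((Ac x + \<psi> x) - (Ac y + \<psi> y)) + L * norm (x - y))"
    by (intro mult_left_mono order_trans[OF norm_triangle_ineq4] add_left_mono lip) auto
  finally show ?thesis by (simp add: algebra_simps)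
qed

lemma perturb_bij:
  assumes lip: "\<And>x y. norm (\<psi> x - \<psi> y) \<le> L * norm (x - y)" and L: "0 \<le> L" "norm Aci * L < 1"
  shows "bij (\<lambda>x. Ac x + \<psi> x)"
proof (rule bijI)
  show "inj (\<lambda>x. Ac x + \<psi> x)"
  proof (rule injI)
    fix x y assume "Ac x + \<psi> x = Ac y + \<psi> y"
    then have "(1 - norm Aci * L) * norm (x - y) \<le> 0" using perturb_ineq[OF lip, of x y] by simp
    then show "x = y" using L by (simp add: mult_le_0_iff)
  qed
  show "surj (\<lambda>x. Ac x + \<psi> x)"
  proof -
    have "\<exists>w. z = Ac w + \<psi> w" for z
    proof -
    let ?T = "\<lambda>w. Aci (z - \<psi> w)"
    have "\<exists>!w. ?T w = w"
    proof (rule banach_fix_type[of "norm Aci * L"])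
      show "0 \<le> norm Aci * L" using L by simp
      show "norm Aci * L < 1" by fact
      show "\<forall>x y. dist (?T x) (?T y) \<le> norm Aci * L * dist x y"
      proof (intro allI)
        fix x y
        have "dist (?T x) (?T y) = norm (Aci (\<psi> y - \<psi> x))"
          by (simp add: dist_norm blinfun.diff_right[symmetric] algebra_simps)
        also have "\<dots> \<le> norm Aci * norm (\<psi> y - \<psi> x)" by (rule norm_blinfun)
        also have "\<dots> \<le> norm Aci * (L * norm (y - x))" by (intro mult_left_mono lip) auto
        finally show "dist (?T x) (?T y) \<le> norm Aci * L * dist x y"
          by (simp add: dist_norm norm_minus_commute mult.assoc)
      qed
    qed
    then obtain w where w: "Aci (z - \<psi> w) = w" by blast
    have "Ac w + \<psi> w = Ac (Aci (z - \<psi> w)) + \<psi> w" using w by simp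
    also have "\<dots> = z" by simp
    finally show ?thesis by metis
    qed
    then show ?thesis unfolding surj_def by blast
  qed
qed

definition Inv :: "'c \<Rightarrow>\<^sub>L 'c \<Rightarrow> 'c \<Rightarrow>\<^sub>L 'c" where
  "Inv S = Blinfun (inv (\<lambda>x. Ac x + S x))"

lemma blin_lip:
  assumes "norm S \<le> L"
  shows "norm (blinfun_apply S x - S y) \<le> L * norm (x - y)"
proof -
  have "norm (S x - S y) = norm (S (x - y))" by (simp add: blinfun.diff_right)
  also have "\<dots> \<le> norm S * norm (x - y)" by (rule norm_blinfun)
  also have "\<dots> \<le> L * norm (x - y)" by (intro mult_right_mono assms) auto
  finally show ?thesis .
qed

context
  fixes S :: "'c \<Rightarrow>\<^sub>L 'c" and L :: real
  assumes SL: "norm S \<le> L" and L0: "0 \<le> L" and bL: "norm Aci * L < 1"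
begin

lemma S_bij: "bij (\<lambda>x. Ac x + S x)"
  by (rule perturb_bij[OF blin_lip[OF SL] L0 bL])

lemma inv_left: "inv (\<lambda>x. Ac x + S x) (Ac v + S v) = v"
  using inv_f_f[OF bij_is_inj[OF S_bij], of v] by simp

lemma inv_right: "Ac (inv (\<lambda>x. Ac x + S x) v) + S (inv (\<lambda>x. Ac x + S x) v) = v"
  using surj_f_inv_f[OF bij_is_surj[OF S_bij], of v] by simp

lemma inv_bound: "norm (inv (\<lambda>x. Ac x + S x) v) \<le> norm v * (norm Aci / (1 - norm Aci * L))"
proof -
  let ?w = "inv (\<lambda>x. Ac x + S x) v"
  have "(1 - norm Aci * L) * norm (?w - 0) \<le> norm Aci * norm ((Ac ?w + S ?w) - (Ac 0 + S 0))"
    by (rule perturb_ineq[OF blin_lip[OF SL]])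
  then have "(1 - norm Aci * L) * norm ?w \<le> norm Aci * norm v" by (simp add: inv_right)
  then show ?thesis using bL by (simp add: field_simps)
qed

lemma inv_bl: "bounded_linear (inv (\<lambda>x. Ac x + S x))"
proof (rule bounded_linear_intro[where K="norm Aci / (1 - norm Aci * L)"])
  let ?i = "inv (\<lambda>x. Ac x + S x)"
  show "?i (x + y) = ?i x + ?i y" for x y
  proof -
    have e: "Ac (a + b) + S (a + b) = (Ac a + S a) + (Ac b + S b)" for a b
      by (simp add: blinfun.add_right algebra_simps)
    have "x + y = Ac (?i x + ?i y) + S (?i x + ?i y)"
      unfolding e inv_right ..
    from arg_cong[OF this, of ?i] show ?thesis by (simp only: inv_left)
  qed
  show "?i (r *\<^sub>R x) = r *\<^sub>R ?i x" for r x
  proof -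
    have e: "Ac (r *\<^sub>R a) + S (r *\<^sub>R a) = r *\<^sub>R (Ac a + S a)" for a
      by (simp add: blinfun.scaleR_right scaleR_add_right)
    have "r *\<^sub>R x = Ac (r *\<^sub>R ?i x) + S (r *\<^sub>R ?i x)"
      unfolding e inv_right ..
    from arg_cong[OF this, of ?i] show ?thesis by (simp only: inv_left)
  qed
  show "norm (?i x) \<le> norm x * (norm Aci / (1 - norm Aci * L))" for x by (rule inv_bound)
qed

lemma Inv_apply: "blinfun_apply (Inv S) = inv (\<lambda>x. Ac x + S x)"
  unfolding Inv_def by (rule bounded_linear_Blinfun_apply[OF inv_bl])

lemma Inv_left[simp]: "Inv S (Ac v + S v) = v"
  by (simp add: Inv_apply inv_left)

lemma Inv_right[simp]: "Ac (Inv S v) + S (Inv S v) = v"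
  by (simp add: Inv_apply inv_right)

lemma Inv_norm: "norm (Inv S) \<le> norm Aci / (1 - norm Aci * L)"
proof (rule norm_blinfun_bound)
  show "0 \<le> norm Aci / (1 - norm Aci * L)" using bL by simp
  show "norm (Inv S x) \<le> norm Aci / (1 - norm Aci * L) * norm x" for x
    using inv_bound[of x] by (simp add: Inv_apply mult.commute)
qed

end

lemma Inv_diff:
  assumes S1: "norm S1 \<le> L" and S2: "norm S2 \<le> L" and L0: "0 \<le> L" and bL: "norm Aci * L < 1"
  shows "norm (Inv S1 - Inv S2) \<le> (norm Aci / (1 - norm Aci * L)) * (norm Aci / (1 - norm Aci * L)) * norm (S2 - S1)"
proof -
  let ?N = "norm Aci / (1 - norm Aci * L)"
  have eq: "Inv S1 - Inv S2 = Inv S1 o\<^sub>L (S2 - S1) o\<^sub>L Inv S2"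
  proof (rule blinfun_eqI)
    fix v
    let ?w = "Inv S2 v"
    have w: "Ac ?w + S2 ?w = v" using Inv_right[OF S2 L0 bL] .
    have "(S2 - S1) ?w = (Ac ?w + S2 ?w) - (Ac ?w + S1 ?w)" by (simp add: blinfun.diff_left)
    then have "(Inv S1 o\<^sub>L (S2 - S1) o\<^sub>L Inv S2) v = Inv S1 v - Inv S1 (Ac ?w + S1 ?w)"
      by (simp add: w blinfun.diff_right)
    also have "\<dots> = Inv S1 v - ?w" using Inv_left[OF S1 L0 bL] by simp
    finally show "(Inv S1 - Inv S2) v = (Inv S1 o\<^sub>L (S2 - S1) o\<^sub>L Inv S2) v"
      by (simp add: blinfun.diff_left)
  qed
  have "norm (Inv S1 o\<^sub>L (S2 - S1) o\<^sub>L Inv S2) \<le> norm (Inv S1 o\<^sub>L (S2 - S1)) * norm (Inv S2)"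
    by (rule norm_blinfun_compose)
  also have "\<dots> \<le> (norm (Inv S1) * norm (S2 - S1)) * norm (Inv S2)"
    by (intro mult_right_mono norm_blinfun_compose) auto
  also have "\<dots> \<le> (?N * norm (S2 - S1)) * ?N"
    using bL by (intro mult_mono Inv_norm[OF S1 L0 bL] Inv_norm[OF S2 L0 bL] mult_nonneg_nonneg) auto
  finally show ?thesis unfolding eq by (simp add: algebra_simps)
qed

lemma inv_D1:
  assumes D: "D1 r R" and RL: "\<And>x. norm (R x) \<le> L" and L0: "0 \<le> L" and bL: "norm Aci * L < 1"
  shows "bij (\<lambda>x. Ac x + r x)"
    and "D1 (inv (\<lambda>x. Ac x + r x)) (\<lambda>y. Inv (R (inv (\<lambda>x. Ac x + r x) y)))"
    and "\<And>y. norm (Inv (R (inv (\<lambda>x. Ac x + r x) y))) \<le> norm Aci / (1 - norm Aci * L)"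
proof -
  let ?\<Phi> = "\<lambda>x. Ac x + r x"
  let ?\<psi> = "inv ?\<Phi>"
  let ?N = "norm Aci / (1 - norm Aci * L)"
  have N0: "0 \<le> ?N" using bL by simp
  have lipr: "\<And>x y. norm (r x - r y) \<le> L * norm (x - y)" by (rule D1_lip[OF D RL])
  show bij: "bij ?\<Phi>" by (rule perturb_bij[OF lipr L0 bL])
  have PP: "?\<Phi> (?\<psi> y) = y" for y using surj_f_inv_f[OF bij_is_surj[OF bij], of y] by simp
  have lipi: "dist (?\<psi> y) (?\<psi> z) \<le> ?N * dist y z" for y z
  proof -
    have "(1 - norm Aci * L) * norm (?\<psi> y - ?\<psi> z) \<le> norm Aci * norm (y - z)"
      using perturb_ineq[OF lipr, of "?\<psi> y" "?\<psi> z"] by (simp only: PP)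
    then show ?thesis using bL by (simp add: dist_norm field_simps)
  qed
  have cpsi: "continuous_on UNIV ?\<psi>"
    by (rule lipschitz_on_continuous_on[of ?N]) (use lipi N0 in \<open>auto intro!: lipschitz_onI\<close>)
  have DPhi: "D1 ?\<Phi> (\<lambda>x. Ac + R x)" using D1_add[OF D1_lin D] .
  show bnd: "norm (Inv (R (?\<psi> y))) \<le> ?N" for y by (rule Inv_norm[OF RL L0 bL])
  have der: "(?\<psi> has_derivative blinfun_apply (Inv (R (?\<psi> y)))) (at y)" for y
  proof (rule has_derivative_inverse_basic[where f="?\<Phi>" and T=UNIV])
    show "(?\<Phi> has_derivative blinfun_apply (Ac + R (?\<psi> y))) (at (?\<psi> y))"
      using DPhi unfolding D1_def by blast
    show "bounded_linear (blinfun_apply (Inv (R (?\<psi> y))))" by (rule blinfun.bounded_linear_right)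
    show "blinfun_apply (Inv (R (?\<psi> y))) \<circ> blinfun_apply (Ac + R (?\<psi> y)) = id"
      by (rule ext) (simp add: blinfun.add_left Inv_left[OF RL L0 bL])
    show "continuous (at y) ?\<psi>" using cpsi by (simp add: continuous_on_eq_continuous_at)
    show "?\<Phi> (?\<psi> z) = z" for z by (rule PP)
  qed auto
  have cR: "continuous_on UNIV (\<lambda>y. R (?\<psi> y))"
    using continuous_on_compose[OF cpsi, of R] continuous_on_subset[of UNIV R] D unfolding D1_def by (simp add: o_def)
  have cont: "continuous_on UNIV (\<lambda>y. Inv (R (?\<psi> y)))"
    unfolding continuous_on_iff
  proof (intro ballI allI impI)
    fix y and e :: real assume e: "0 < e"
    have e': "e / (?N * ?N + 1) > 0" using e N0 by (simp add: add_nonneg_pos)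
    from cR[unfolded continuous_on_iff] e' obtain d where d: "d > 0"
      "\<And>y'. dist y' y < d \<Longrightarrow> dist (R (?\<psi> y')) (R (?\<psi> y)) < e / (?N * ?N + 1)"
      by blast
    show "\<exists>d>0. \<forall>y'\<in>UNIV. dist y' y < d \<longrightarrow> dist (Inv (R (?\<psi> y'))) (Inv (R (?\<psi> y))) < e"
    proof (intro exI[of _ d] conjI ballI impI)
      fix y' assume "dist y' y < d"
      then have a: "norm (R (?\<psi> y) - R (?\<psi> y')) < e / (?N * ?N + 1)" using d(2) by (simp add: dist_norm norm_minus_commute)
      have "dist (Inv (R (?\<psi> y'))) (Inv (R (?\<psi> y))) \<le> ?N * ?N * norm (R (?\<psi> y) - R (?\<psi> y'))"
        unfolding dist_norm by (rule Inv_diff[OF RL RL L0 bL])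
      also have "\<dots> \<le> ?N * ?N * (e / (?N * ?N + 1))" using a N0 by (intro mult_left_mono) auto
      also have "\<dots> < e" using aux_lt[of "?N * ?N" e] e N0 by simp
      finally show "dist (Inv (R (?\<psi> y'))) (Inv (R (?\<psi> y))) < e" .
    qed (use d in auto)
  qed
  have "bounded (range (\<lambda>y. Inv (R (?\<psi> y))))" unfolding bounded_range_iff using bnd by blast
  then show "D1 ?\<psi> (\<lambda>y. Inv (R (?\<psi> y)))" unfolding D1_def using der cont by blast
qed

end


lemma consts_facts:
  fixes c b a s Lg Lc :: real
  assumes S: "S_cond 2 c b a s Lg Lc" and g0: "0 \<le> Lg" and c0: "0 \<le> Lc"
    and nn: "0 \<le> c" "0 \<le> b" "0 \<le> a" "0 \<le> s"
  defines "Lr \<equiv> L_r c Lg Lc" and "Lu \<equiv> L_u c a Lg Lc" and "Ls \<equiv> L_s c b s Lg Lc"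
  shows "Lc < 1" "0 \<le> Lr" "b * Lr < 1" "0 \<le> Lu" "0 \<le> Ls" "Lu \<le> 1 + Lc" "Ls \<le> 1 + Lc"
    "c * Lc + Lg * (1 + Lc) + Lc * (c + Lr) \<le> Lr"
    "a * (Lu * (c + Lr) + Lg * (1 + Lc)) \<le> Lu"
    "(s * Ls + Lg * (1 + Lc)) * (b / (1 - b * Lr)) \<le> Ls"
proof -
  have Lc1: "Lc < 1" and bLr: "Lr * b < 1" and D: "Lr * a + c * a < 1" and D': "Lr * b + s * b < 1"
    and t2: "theta2 1 c a Lg Lc < 1" and t3: "theta3 1 c b s Lg Lc < 1"
    using S unfolding S_cond_def Lr_def by auto
  show "Lc < 1" by fact
  have LrE: "Lr * (1 - Lc) = Lg + Lc * (2 * c + Lg)" using Lc1 unfolding Lr_def L_r_def by simp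
  show Lr0: "0 \<le> Lr" unfolding Lr_def L_r_def using Lc1 g0 c0 nn by simp
  show "b * Lr < 1" using bLr by (simp add: mult.commute)
  have LuE: "Lu * (1 - Lr * a - c * a) = a * (1 + Lc) * Lg" using D unfolding Lu_def L_u_def Lr_def by simp
  have LsE: "Ls * (1 - Lr * b - s * b) = b * (1 + Lc) * Lg" using D' unfolding Ls_def L_s_def Lr_def by simp
  show Lu0: "0 \<le> Lu" unfolding Lu_def L_u_def using D g0 c0 nn by (simp add: Lr_def)
  show Ls0: "0 \<le> Ls" unfolding Ls_def L_s_def using D' g0 c0 nn by (simp add: Lr_def)
  show "c * Lc + Lg * (1 + Lc) + Lc * (c + Lr) \<le> Lr" using LrE by (simp add: algebra_simps)
  show "a * (Lu * (c + Lr) + Lg * (1 + Lc)) \<le> Lu" using LuE by (simp add: algebra_simps)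
  have pos: "0 < 1 - b * Lr" using bLr by (simp add: mult.commute)
  have "(s * Ls + Lg * (1 + Lc)) * b = Ls * (1 - b * Lr)" using LsE by (simp add: algebra_simps)
  then show "(s * Ls + Lg * (1 + Lc)) * (b / (1 - b * Lr)) \<le> Ls"
    using pos by (simp add: field_simps)
  have "a * (c + Lr + Lg + Lu) < 1" using t2 unfolding theta2_def Lr_def Lu_def by simp
  then have "a * Lg \<le> 1 - Lr * a - c * a" using Lu0 nn by (simp add: algebra_simps) (smt (verit) mult_nonneg_nonneg)
  then have "a * (1 + Lc) * Lg \<le> (1 + Lc) * (1 - Lr * a - c * a)" using c0
    by (metis mult.commute mult.left_commute mult_left_mono add_nonneg_nonneg zero_le_one)
  then show "Lu \<le> 1 + Lc" using LuE D
    by (smt (verit) mult_le_cancel_right)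
  have Lm: "L_m1 c b Lg Lc = b / (1 - b * Lr)"
    unfolding L_m1_def L_t_def Lr_def[symmetric] using pos by (simp add: field_simps power2_eq_square)
  have Lm0: "0 \<le> b / (1 - b * Lr)" using pos nn by simp
  have "b / (1 - b * Lr) * (s * (1 + b / (1 - b * Lr) * Ls) + Lg * (1 + b / (1 - b * Lr) * (1 + Lc))) < 1"
    using t3 unfolding theta3_def Lm Lr_def Ls_def by simp
  moreover have "b / (1 - b * Lr) * (s + Lg) \<le> b / (1 - b * Lr) * (s * (1 + b / (1 - b * Lr) * Ls) + Lg * (1 + b / (1 - b * Lr) * (1 + Lc)))"
  proof (rule mult_left_mono[OF add_mono Lm0])
    have "0 \<le> s * (b / (1 - b * Lr) * Ls)" using Lm0 Ls0 nn by (intro mult_nonneg_nonneg) auto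
    then show "s \<le> s * (1 + b / (1 - b * Lr) * Ls)" by (simp add: algebra_simps)
    have "0 \<le> Lg * (b / (1 - b * Lr) * (1 + Lc))" using Lm0 g0 c0 by (intro mult_nonneg_nonneg) auto
    then show "Lg \<le> Lg * (1 + b / (1 - b * Lr) * (1 + Lc))" by (simp add: algebra_simps)
  qed
  ultimately have "b / (1 - b * Lr) * (s + Lg) < 1" by linarith
  then have "b * (s + Lg) < 1 - b * Lr" using pos by (simp add: field_simps)
  then have "b * Lg \<le> 1 - Lr * b - s * b" by (simp add: algebra_simps)
  then have "b * (1 + Lc) * Lg \<le> (1 + Lc) * (1 - Lr * b - s * b)" using c0
    by (metis mult.commute mult.left_commute mult_left_mono add_nonneg_nonneg zero_le_one)
  then show "Ls \<le> 1 + Lc" using LsE D'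
    by (smt (verit) mult_le_cancel_right)
qed


lemma DS_add: "DS a b c + DS a' b' c' = DS (a + a') (b + b') (c + c')"
  by (simp add: plus_dsum_def)
lemma DS_scale: "r *\<^sub>R DS a b c = DS (r *\<^sub>R a) (r *\<^sub>R b) (r *\<^sub>R c)"
  by (simp add: scaleR_dsum_def)
lemma DS_zero: "DS 0 0 0 = 0"
  by (simp add: zero_dsum_def)
lemma norm_DS: "norm (DS a b c) = max (norm a) (max (norm b) (norm c))"
  by (simp add: norm_dsum_def)

lemma bl_pc: "bounded_linear pc"
  by (rule bounded_linear_intro[where K=1]) (auto simp: norm_pc_le)
lemma bl_pu: "bounded_linear pu"
  by (rule bounded_linear_intro[where K=1]) (auto simp: norm_pu_le)
lemma bl_ps: "bounded_linear ps"
  by (rule bounded_linear_intro[where K=1]) (auto simp: norm_ps_le)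
lemma bl_injC: "bounded_linear (\<lambda>v. DS v 0 0)"
  by (rule bounded_linear_intro[where K=1]) (auto simp: DS_add DS_scale norm_DS)
lemma bl_injU: "bounded_linear (\<lambda>v. DS 0 v 0)"
  by (rule bounded_linear_intro[where K=1]) (auto simp: DS_add DS_scale norm_DS)
lemma bl_injS: "bounded_linear (\<lambda>v. DS 0 0 v)"
  by (rule bounded_linear_intro[where K=1]) (auto simp: DS_add DS_scale norm_DS)

definition "pcL = Blinfun pc"
definition "puL = Blinfun pu"
definition "psL = Blinfun ps"
definition "injC = Blinfun (\<lambda>v. DS v 0 0)"
definition "injU = Blinfun (\<lambda>v. DS 0 v 0)"
definition "injS = Blinfun (\<lambda>v. DS 0 0 v)"

lemma pcL_apply[simp]: "blinfun_apply pcL x = pc x" unfolding pcL_def by (simp add: bounded_linear_Blinfun_apply[OF bl_pc])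
lemma puL_apply[simp]: "blinfun_apply puL x = pu x" unfolding puL_def by (simp add: bounded_linear_Blinfun_apply[OF bl_pu])
lemma psL_apply[simp]: "blinfun_apply psL x = ps x" unfolding psL_def by (simp add: bounded_linear_Blinfun_apply[OF bl_ps])
lemma injC_apply[simp]: "blinfun_apply injC x = DS x 0 0" unfolding injC_def by (simp add: bounded_linear_Blinfun_apply[OF bl_injC])
lemma injU_apply[simp]: "blinfun_apply injU x = DS 0 x 0" unfolding injU_def by (simp add: bounded_linear_Blinfun_apply[OF bl_injU])
lemma injS_apply[simp]: "blinfun_apply injS x = DS 0 0 x" unfolding injS_def by (simp add: bounded_linear_Blinfun_apply[OF bl_injS])

lemma norm_pcL: "norm pcL \<le> 1" by (rule norm_blinfun_bound) (auto simp: norm_pc_le)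
lemma norm_puL: "norm puL \<le> 1" by (rule norm_blinfun_bound) (auto simp: norm_pu_le)
lemma norm_psL: "norm psL \<le> 1" by (rule norm_blinfun_bound) (auto simp: norm_ps_le)

lemma DS_split: "DS a b c = injC a + injU b + injS c"
  by (simp add: DS_add)

lemma C1_blin: "C1 f f' \<Longrightarrow> C1 (\<lambda>x. blinfun_apply T (f x)) (\<lambda>x. T o\<^sub>L f' x)"
  unfolding C1_def using D1_blin bounded_range_blin by blast

lemma comp_dv:
  assumes "Ckb 1 \<Lambda>"
  shows "Ckb 1 (\<lambda>x. pc (\<Lambda> x))" "dv (\<lambda>x. pc (\<Lambda> x)) = (\<lambda>x. pcL o\<^sub>L dv \<Lambda> x)"
    "Ckb 1 (\<lambda>x. pu (\<Lambda> x))" "dv (\<lambda>x. pu (\<Lambda> x)) = (\<lambda>x. puL o\<^sub>L dv \<Lambda> x)"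
    "Ckb 1 (\<lambda>x. ps (\<Lambda> x))" "dv (\<lambda>x. ps (\<Lambda> x)) = (\<lambda>x. psL o\<^sub>L dv \<Lambda> x)"
proof -
  have C: "C1 \<Lambda> (dv \<Lambda>)" by (rule Ckb1_C1[OF assms])
  have 1: "C1 (\<lambda>x. pc (\<Lambda> x)) (\<lambda>x. pcL o\<^sub>L dv \<Lambda> x)" using C1_blin[OF C, of pcL] by simp
  have 2: "C1 (\<lambda>x. pu (\<Lambda> x)) (\<lambda>x. puL o\<^sub>L dv \<Lambda> x)" using C1_blin[OF C, of puL] by simp
  have 3: "C1 (\<lambda>x. ps (\<Lambda> x)) (\<lambda>x. psL o\<^sub>L dv \<Lambda> x)" using C1_blin[OF C, of psL] by simp
  show "Ckb 1 (\<lambda>x. pc (\<Lambda> x))" "dv (\<lambda>x. pc (\<Lambda> x)) = (\<lambda>x. pcL o\<^sub>L dv \<Lambda> x)"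
    "Ckb 1 (\<lambda>x. pu (\<Lambda> x))" "dv (\<lambda>x. pu (\<Lambda> x)) = (\<lambda>x. puL o\<^sub>L dv \<Lambda> x)"
    "Ckb 1 (\<lambda>x. ps (\<Lambda> x))" "dv (\<lambda>x. ps (\<Lambda> x)) = (\<lambda>x. psL o\<^sub>L dv \<Lambda> x)"
    using C1_Ckb[OF 1] C1_Ckb[OF 2] C1_Ckb[OF 3] dv_unique[OF 1] dv_unique[OF 2] dv_unique[OF 3] by auto
qed

lemma lim_aux:
  assumes "\<epsilon> \<longlonglongrightarrow> 0" "\<And>m. q \<le> \<epsilon> m + (p::real)"
  shows "q \<le> p"
proof -
  have "(\<lambda>m. \<epsilon> m + p) \<longlonglongrightarrow> 0 + p" by (intro tendsto_add assms tendsto_const)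
  then have "(\<lambda>m. \<epsilon> m + p) \<longlonglongrightarrow> p" by simp
  then show ?thesis using LIMSEQ_le_const[of "\<lambda>m. \<epsilon> m + p" p q] assms(2) by blast
qed

lemma lim_comp:
  assumes "\<epsilon> \<longlonglongrightarrow> 0" "\<And>m. norm (T o\<^sub>L A m) \<le> L" "\<And>m. norm (A m - B) \<le> \<epsilon> m" "norm T \<le> 1"
  shows "norm (T o\<^sub>L B) \<le> L"
proof (rule lim_aux[OF assms(1)])
  fix m
  have e: "T o\<^sub>L B = (T o\<^sub>L A m) - (T o\<^sub>L (A m - B))"
    by (simp add: bounded_bilinear.diff_right[OF bounded_bilinear_blinfun_compose])
  have "norm (T o\<^sub>L B) \<le> norm (T o\<^sub>L A m) + norm (T o\<^sub>L (A m - B))" unfolding e by (rule norm_triangle_ineq4)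
  also have "norm (T o\<^sub>L (A m - B)) \<le> norm T * norm (A m - B)" by (rule norm_blinfun_compose)
  also have "\<dots> \<le> 1 * \<epsilon> m" using assms(3,4) by (intro mult_mono) auto
  finally show "norm (T o\<^sub>L B) \<le> \<epsilon> m + L" using assms(2)[of m] by simp
qed

lemma Gamma0_closed: "C1b_closed (Gamma0 Lr Lu Ls)"
  unfolding C1b_closed_def
proof (intro allI impI)
  fix F :: "nat \<Rightarrow> 'a \<Rightarrow> ('a, 'b, 'c) dsum" and \<Lambda>
  assume a: "(\<forall>m. F m \<in> Gamma0 Lr Lu Ls) \<and> Ckb 1 \<Lambda> \<and> (\<lambda>m. Ckb_norm 1 (\<lambda>x. F m x - \<Lambda> x)) \<longlonglongrightarrow> 0"
  define \<epsilon> where "\<epsilon> m = Ckb_norm 1 (\<lambda>x. F m x - \<Lambda> x)" for m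
  have FG: "F m \<in> Gamma0 Lr Lu Ls" for m using a by blast
  have L: "Ckb 1 \<Lambda>" and eps: "\<epsilon> \<longlonglongrightarrow> 0" using a unfolding \<epsilon>_def by auto
  have FC: "Ckb 1 (F m)" for m using FG[of m] unfolding Gamma0_def by blast
  have dC: "C1 (\<lambda>x. F m x - \<Lambda> x) (\<lambda>x. dv (F m) x - dv \<Lambda> x)" for m
    using Ckb1_C1[OF FC[of m]] Ckb1_C1[OF L] unfolding C1_def using D1_diff bounded_range_diff by blast
  have b0: "norm (F m y - \<Lambda> y) \<le> \<epsilon> m" for m y
    using Ckb_norm_ge(1)[OF C1_Ckb[OF dC[of m]]] unfolding \<epsilon>_def by simp
  have b1: "norm (dv (F m) y - dv \<Lambda> y) \<le> \<epsilon> m" for m y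
    using Ckb_norm_ge(2)[OF C1_Ckb[OF dC[of m]], of y] unfolding \<epsilon>_def dv_unique[OF dC[of m]] by simp
  have "norm (\<Lambda> 0) \<le> 0"
  proof (rule lim_aux[OF eps])
    fix m have "F m 0 = 0" using FG[of m] unfolding Gamma0_def by blast
    then show "norm (\<Lambda> 0) \<le> \<epsilon> m + 0" using b0[of m 0] by simp
  qed
  then have L0: "\<Lambda> 0 = 0" by simp
  have "norm (dv \<Lambda> 0) \<le> 0"
  proof (rule lim_aux[OF eps])
    fix m have "dv (F m) 0 = 0" using FG[of m] Dzero_iff[OF FC[of m]] unfolding Gamma0_def by blast
    then show "norm (dv \<Lambda> 0) \<le> \<epsilon> m + 0" using b1[of m 0] by simp
  qed
  then have DL0: "D_zero_at0 \<Lambda>" using Dzero_iff[OF L] by simp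
  have c1: "Dsup (\<lambda>x. pc (\<Lambda> x)) \<le> Lr"
  proof (rule le_Dsup[OF comp_dv(1)[OF L]])
    fix x
    show "norm (dv (\<lambda>x. pc (\<Lambda> x)) x) \<le> Lr" unfolding comp_dv(2)[OF L]
    proof (rule lim_comp[OF eps _ b1 norm_pcL])
      fix m show "norm (pcL o\<^sub>L dv (F m) x) \<le> Lr"
        using Dsup_le[OF comp_dv(1)[OF FC[of m]], of Lr x] FG[of m] unfolding Gamma0_def comp_dv(2)[OF FC[of m]] by blast
    qed
  qed
  have c2: "Dsup (\<lambda>x. pu (\<Lambda> x)) \<le> Lu"
  proof (rule le_Dsup[OF comp_dv(3)[OF L]])
    fix x
    show "norm (dv (\<lambda>x. pu (\<Lambda> x)) x) \<le> Lu" unfolding comp_dv(4)[OF L]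
    proof (rule lim_comp[OF eps _ b1 norm_puL])
      fix m show "norm (puL o\<^sub>L dv (F m) x) \<le> Lu"
        using Dsup_le[OF comp_dv(3)[OF FC[of m]], of Lu x] FG[of m] unfolding Gamma0_def comp_dv(4)[OF FC[of m]] by blast
    qed
  qed
  have c3: "Dsup (\<lambda>x. ps (\<Lambda> x)) \<le> Ls"
  proof (rule le_Dsup[OF comp_dv(5)[OF L]])
    fix x
    show "norm (dv (\<lambda>x. ps (\<Lambda> x)) x) \<le> Ls" unfolding comp_dv(6)[OF L]
    proof (rule lim_comp[OF eps _ b1 norm_psL])
      fix m show "norm (psL o\<^sub>L dv (F m) x) \<le> Ls"
        using Dsup_le[OF comp_dv(5)[OF FC[of m]], of Ls x] FG[of m] unfolding Gamma0_def comp_dv(6)[OF FC[of m]] by blast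
    qed
  qed
  show "\<Lambda> \<in> Gamma0 Lr Lu Ls" unfolding Gamma0_def using L L0 DL0 c1 c2 c3 by blast
qed


lemma theta_in:
  fixes Ac Aci :: "'c::banach \<Rightarrow>\<^sub>L 'c" and Aui :: "'u::banach \<Rightarrow>\<^sub>L 'u" and As :: "'s::banach \<Rightarrow>\<^sub>L 's"
    and g :: "('c, 'u, 's) dsum \<Rightarrow> ('c, 'u, 's) dsum" and kc :: "'c \<Rightarrow> 'c"
    and \<Lambda> :: "'c \<Rightarrow> ('c, 'u, 's) dsum"
  assumes inv1: "Aci o\<^sub>L Ac = id_blinfun" and inv2: "Ac o\<^sub>L Aci = id_blinfun"
    and gC: "C1 g G" and GL: "\<And>y. norm (G y) \<le> Lg" and G0: "G 0 = 0" and g0: "g 0 = 0"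
    and kC: "C1 kc Kc" and KL: "\<And>x. norm (Kc x) \<le> Lc" and Kc0: "Kc 0 = 0" and kc0: "kc 0 = 0"
    and Lr0: "0 \<le> Lr" and bLr: "norm Aci * Lr < 1" and Lu1: "Lu \<le> 1 + Lc" and Ls1: "Ls \<le> 1 + Lc"
    and Lc0: "0 \<le> Lc" and Lg0: "0 \<le> Lg"
    and I1: "norm Ac * Lc + Lg * (1 + Lc) + Lc * (norm Ac + Lr) \<le> Lr"
    and I2: "norm Aui * (Lu * (norm Ac + Lr) + Lg * (1 + Lc)) \<le> Lu"
    and I3: "(norm As * Ls + Lg * (1 + Lc)) * (norm Aci / (1 - norm Aci * Lr)) \<le> Ls"
    and LG: "\<Lambda> \<in> Gamma0 Lr Lu Ls"
  shows "bij (\<lambda>x. Ac x + pc (\<Lambda> x))" "Theta Ac Aui As g kc \<Lambda> \<in> Gamma0 Lr Lu Ls"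
proof -
  interpret invdata Ac Aci using inv1 inv2 by unfold_locales
  have L: "Ckb 1 \<Lambda>" and \<Lambda>0: "\<Lambda> 0 = 0" and DL0: "D_zero_at0 \<Lambda>"
    and dr: "Dsup (\<lambda>x. pc (\<Lambda> x)) \<le> Lr" and du: "Dsup (\<lambda>x. pu (\<Lambda> x)) \<le> Lu" and ds: "Dsup (\<lambda>x. ps (\<Lambda> x)) \<le> Ls"
    using LG unfolding Gamma0_def by auto
  define \<Lambda>' where "\<Lambda>' = dv \<Lambda>"
  have CL: "C1 \<Lambda> \<Lambda>'" unfolding \<Lambda>'_def by (rule Ckb1_C1[OF L])
  have \<Lambda>'0: "\<Lambda>' 0 = 0" using Dzero_iff[OF L] DL0 unfolding \<Lambda>'_def by simp
  define r where "r x = pc (\<Lambda> x)" for x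
  define ku where "ku x = pu (\<Lambda> x)" for x
  define ks where "ks x = ps (\<Lambda> x)" for x
  define R where "R x = pcL o\<^sub>L \<Lambda>' x" for x
  define U where "U x = puL o\<^sub>L \<Lambda>' x" for x
  define S where "S x = psL o\<^sub>L \<Lambda>' x" for x
  have Cr: "C1 r R" using C1_blin[OF CL, of pcL] unfolding r_def R_def by simp
  have Cu: "C1 ku U" using C1_blin[OF CL, of puL] unfolding ku_def U_def by simp
  have Cs: "C1 ks S" using C1_blin[OF CL, of psL] unfolding ks_def S_def by simp
  have RL: "norm (R x) \<le> Lr" for x using Dsup_le[OF comp_dv(1)[OF L] dr] comp_dv(2)[OF L] unfolding R_def \<Lambda>'_def by simp
  have UL: "norm (U x) \<le> Lu" for x using Dsup_le[OF comp_dv(3)[OF L] du] comp_dv(4)[OF L] unfolding U_def \<Lambda>'_def by simp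
  have SL: "norm (S x) \<le> Ls" for x using Dsup_le[OF comp_dv(5)[OF L] ds] comp_dv(6)[OF L] unfolding S_def \<Lambda>'_def by simp
  have R0: "R 0 = 0" "U 0 = 0" "S 0 = 0" unfolding R_def U_def S_def \<Lambda>'0 by simp_all
  have r0: "r 0 = 0" "ku 0 = 0" "ks 0 = 0" unfolding r_def ku_def ks_def \<Lambda>0 by simp_all
  have Dr: "D1 r R" and Du: "D1 ku U" and Ds: "D1 ks S" and Dk: "D1 kc Kc" and Dg: "D1 g G"
    using Cr Cu Cs kC gC unfolding C1_def by auto
  define \<Phi> where "\<Phi> x = Ac x + r x" for x
  define \<Psi> where "\<Psi> = inv \<Phi>"
  have \<Phi>eq: "\<Phi> = (\<lambda>x. Ac x + r x)" unfolding \<Phi>_def ..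
  have bij\<Phi>: "bij \<Phi>" unfolding \<Phi>eq by (rule inv_D1(1)[OF Dr RL Lr0 bLr])
  then show "bij (\<lambda>x. Ac x + pc (\<Lambda> x))" unfolding \<Phi>_def r_def by simp
  have D\<Psi>: "D1 \<Psi> (\<lambda>y. Inv (R (\<Psi> y)))" unfolding \<Psi>_def \<Phi>eq by (rule inv_D1(2)[OF Dr RL Lr0 bLr])
  have \<Psi>N: "norm (Inv (R (\<Psi> y))) \<le> norm Aci / (1 - norm Aci * Lr)" for y
    unfolding \<Psi>_def \<Phi>eq by (rule inv_D1(3)[OF Dr RL Lr0 bLr])
  have D\<Phi>: "D1 \<Phi> (\<lambda>x. Ac + R x)" unfolding \<Phi>eq by (rule D1_add[OF D1_lin Dr])
  have \<Phi>0: "\<Phi> 0 = 0" unfolding \<Phi>_def using r0 by simp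
  have \<Psi>0: "\<Psi> 0 = 0" unfolding \<Psi>_def using inv_f_f[OF bij_is_inj[OF bij\<Phi>], of 0] \<Phi>0 by simp
  have nAR: "norm (Ac + R x) \<le> norm Ac + Lr" for x
    using norm_triangle_ineq[of Ac "R x"] RL[of x] by simp
  define K where "K = Kmap kc ku ks"
  define KD where "KD x = (injC o\<^sub>L (id_blinfun + Kc x)) + (injU o\<^sub>L U x) + (injS o\<^sub>L S x)" for x
  have Keq: "K = (\<lambda>x. injC (x + kc x) + injU (ku x) + injS (ks x))"
    unfolding K_def by (rule ext) (simp add: Kmap_def DS_add)
  have DK: "D1 K KD" unfolding Keq KD_def
    using D1_add[OF D1_add[OF D1_blin[OF D1_add[OF D1_id Dk]] D1_blin[OF Du]] D1_blin[OF Ds]] .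
  have K0: "K 0 = 0" unfolding K_def Kmap_def using kc0 r0 by (simp add: DS_zero)
  have KDapp: "KD x h = DS (h + Kc x h) (U x h) (S x h)" for x h
    unfolding KD_def by (simp add: blinfun.add_left DS_add)
  have KDn: "norm (KD x) \<le> 1 + Lc" for x
  proof (rule norm_blinfun_bound)
    show "0 \<le> 1 + Lc" using Lc0 by simp
    fix h
    have a1: "norm (h + Kc x h) \<le> (1 + Lc) * norm h"
    proof -
      have "norm (h + Kc x h) \<le> norm h + norm (Kc x h)" by (rule norm_triangle_ineq)
      also have "\<dots> \<le> norm h + norm (Kc x) * norm h" by (intro add_left_mono norm_blinfun)
      also have "\<dots> \<le> norm h + Lc * norm h" using KL[of x] by (intro add_left_mono mult_right_mono) auto
      finally show ?thesis by (simp add: algebra_simps)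
    qed
    have a2: "norm (U x h) \<le> (1 + Lc) * norm h"
      by (rule order_trans[OF norm_blinfun mult_right_mono]) (use UL[of x] Lu1 in auto)
    have a3: "norm (S x h) \<le> (1 + Lc) * norm h"
      by (rule order_trans[OF norm_blinfun mult_right_mono]) (use SL[of x] Ls1 in auto)
    show "norm (KD x h) \<le> (1 + Lc) * norm h" unfolding KDapp norm_DS using a1 a2 a3 by simp
  qed
  have KD0: "True" ..
  have DgK: "D1 (\<lambda>x. g (K x)) (\<lambda>x. G (K x) o\<^sub>L KD x)" by (rule D1_comp[OF DK Dg])
  have bg: "bounded (range g)" and bk: "bounded (range kc)" and bks: "bounded (range ks)"
    using gC kC Cs unfolding C1_def by auto
  have GKn: "norm (G (K x) o\<^sub>L KD x) \<le> Lg * (1 + Lc)" for x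
    by (rule order_trans[OF norm_blinfun_compose mult_mono[OF GL KDn Lg0 norm_ge_zero]])
  define t1 where "t1 x = Ac (kc x) + pc (g (K x)) - kc (\<Phi> x)" for x
  define T1 where "T1 x = ((Ac o\<^sub>L Kc x) + (pcL o\<^sub>L (G (K x) o\<^sub>L KD x))) - (Kc (\<Phi> x) o\<^sub>L (Ac + R x))" for x
  have Dt1: "D1 t1 T1"
  proof -
    have e: "(\<lambda>x. Ac (kc x) + pcL (g (K x)) - kc (\<Phi> x)) = t1" unfolding t1_def[abs_def] pcL_apply ..
    show ?thesis
      using D1_diff[OF D1_add[OF D1_blin[OF Dk, of Ac] D1_blin[OF DgK, of pcL]] D1_comp[OF D\<Phi> Dk]]
      unfolding e T1_def[abs_def] .
  qed
  have bt1: "bounded (range t1)" unfolding t1_def[abs_def]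
    using bounded_range_diff[OF bounded_range_add[OF bounded_range_blin[OF bk, of Ac]
        bounded_range_blin[OF bounded_range_comp[OF bg], of pcL]] bounded_range_comp[OF bk]] by simp
  have T1n: "norm (T1 x) \<le> Lr" for x
  proof -
    have "norm (T1 x) \<le> norm (Ac o\<^sub>L Kc x) + norm (pcL o\<^sub>L (G (K x) o\<^sub>L KD x)) + norm (Kc (\<Phi> x) o\<^sub>L (Ac + R x))"
      unfolding T1_def by (rule order_trans[OF norm_triangle_ineq4 add_right_mono[OF norm_triangle_ineq]])
    also have "\<dots> \<le> norm Ac * Lc + 1 * (Lg * (1 + Lc)) + Lc * (norm Ac + Lr)"
    proof (intro add_mono)
      show "norm (Ac o\<^sub>L Kc x) \<le> norm Ac * Lc"
        by (rule order_trans[OF norm_blinfun_compose mult_left_mono[OF KL norm_ge_zero]])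
      show "norm (pcL o\<^sub>L (G (K x) o\<^sub>L KD x)) \<le> 1 * (Lg * (1 + Lc))"
        by (rule order_trans[OF norm_blinfun_compose mult_mono[OF norm_pcL GKn zero_le_one norm_ge_zero]])
      show "norm (Kc (\<Phi> x) o\<^sub>L (Ac + R x)) \<le> Lc * (norm Ac + Lr)"
        by (rule order_trans[OF norm_blinfun_compose mult_mono[OF KL nAR Lc0 norm_ge_zero]])
    qed
    also have "\<dots> \<le> Lr" using I1 by simp
    finally show ?thesis .
  qed
  define t2 where "t2 x = Aui (ku (\<Phi> x)) - Aui (pu (g (K x)))" for x
  define T2 where "T2 x = (Aui o\<^sub>L (U (\<Phi> x) o\<^sub>L (Ac + R x))) - (Aui o\<^sub>L (puL o\<^sub>L (G (K x) o\<^sub>L KD x)))" for x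
  have Dt2: "D1 t2 T2"
  proof -
    have e: "(\<lambda>x. Aui (ku (\<Phi> x)) - Aui (puL (g (K x)))) = t2" unfolding t2_def[abs_def] puL_apply ..
    have e2: "(\<lambda>x. (Aui o\<^sub>L (U (\<Phi> x) o\<^sub>L (Ac + R x))) - (Aui o\<^sub>L (puL o\<^sub>L (G (K x) o\<^sub>L KD x)))) = T2"
      unfolding T2_def[abs_def] ..
    show ?thesis
      using D1_diff[OF D1_blin[OF D1_comp[OF D\<Phi> Du], of Aui] D1_blin[OF D1_blin[OF DgK, of puL], of Aui]]
      unfolding e e2 .
  qed
  have bt2: "bounded (range t2)" unfolding t2_def[abs_def]
    using bounded_range_diff[OF bounded_range_blin[OF bounded_range_comp[OF Cu[unfolded C1_def, THEN conjunct2]], of Aui]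
        bounded_range_blin[OF bounded_range_blin[OF bounded_range_comp[OF bg]], of Aui puL]] by simp
  have T2n: "norm (T2 x) \<le> Lu" for x
  proof -
    have "norm (T2 x) \<le> norm (Aui o\<^sub>L (U (\<Phi> x) o\<^sub>L (Ac + R x))) + norm (Aui o\<^sub>L (puL o\<^sub>L (G (K x) o\<^sub>L KD x)))"
      unfolding T2_def by (rule norm_triangle_ineq4)
    also have "\<dots> \<le> norm Aui * (Lu * (norm Ac + Lr)) + norm Aui * (1 * (Lg * (1 + Lc)))"
    proof (intro add_mono)
      have "norm (U (\<Phi> x) o\<^sub>L (Ac + R x)) \<le> Lu * (norm Ac + Lr)"
        using order_trans[OF norm_ge_zero UL] by (intro order_trans[OF norm_blinfun_compose mult_mono[OF UL nAR]]) auto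
      then show "norm (Aui o\<^sub>L (U (\<Phi> x) o\<^sub>L (Ac + R x))) \<le> norm Aui * (Lu * (norm Ac + Lr))"
        by (rule order_trans[OF norm_blinfun_compose mult_left_mono[OF _ norm_ge_zero]])
      have "norm (puL o\<^sub>L (G (K x) o\<^sub>L KD x)) \<le> 1 * (Lg * (1 + Lc))"
        by (rule order_trans[OF norm_blinfun_compose mult_mono[OF norm_puL GKn zero_le_one norm_ge_zero]])
      then show "norm (Aui o\<^sub>L (puL o\<^sub>L (G (K x) o\<^sub>L KD x))) \<le> norm Aui * (1 * (Lg * (1 + Lc)))"
        by (rule order_trans[OF norm_blinfun_compose mult_left_mono[OF _ norm_ge_zero]])
    qed
    also have "\<dots> \<le> Lu" using I2 by (simp add: algebra_simps)
    finally show ?thesis .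
  qed
  define h3 where "h3 x = As (ks x) + ps (g (K x))" for x
  define H3 where "H3 x = (As o\<^sub>L S x) + (psL o\<^sub>L (G (K x) o\<^sub>L KD x))" for x
  have Dh3: "D1 h3 H3"
  proof -
    have e: "(\<lambda>x. As (ks x) + psL (g (K x))) = h3" unfolding h3_def[abs_def] psL_apply ..
    show ?thesis
      using D1_add[OF D1_blin[OF Ds, of As] D1_blin[OF DgK, of psL]]
      unfolding e H3_def[abs_def] .
  qed
  have H3n: "norm (H3 x) \<le> norm As * Ls + Lg * (1 + Lc)" for x
  proof -
    have "norm (H3 x) \<le> norm (As o\<^sub>L S x) + norm (psL o\<^sub>L (G (K x) o\<^sub>L KD x))"
      unfolding H3_def by (rule norm_triangle_ineq)
    also have "\<dots> \<le> norm As * Ls + 1 * (Lg * (1 + Lc))"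
    proof (intro add_mono)
      show "norm (As o\<^sub>L S x) \<le> norm As * Ls"
        by (rule order_trans[OF norm_blinfun_compose mult_left_mono[OF SL norm_ge_zero]])
      show "norm (psL o\<^sub>L (G (K x) o\<^sub>L KD x)) \<le> 1 * (Lg * (1 + Lc))"
        by (rule order_trans[OF norm_blinfun_compose mult_mono[OF norm_psL GKn zero_le_one norm_ge_zero]])
    qed
    finally show ?thesis by simp
  qed
  define t3 where "t3 y = h3 (\<Psi> y)" for y
  define T3 where "T3 y = H3 (\<Psi> y) o\<^sub>L Inv (R (\<Psi> y))" for y
  have Dt3: "D1 t3 T3" using D1_comp[OF D\<Psi> Dh3] unfolding t3_def[abs_def] T3_def[abs_def] .
  have bt3: "bounded (range t3)" unfolding t3_def[abs_def] h3_def
    using bounded_range_comp[OF bounded_range_add[OF bounded_range_blin[OF bks, of As]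
        bounded_range_blin[OF bounded_range_comp[OF bg], of psL]], of \<Psi>] by simp
  have T3n: "norm (T3 y) \<le> Ls" for y
  proof -
    have "norm (T3 y) \<le> (norm As * Ls + Lg * (1 + Lc)) * (norm Aci / (1 - norm Aci * Lr))"
      unfolding T3_def
    proof (rule order_trans[OF norm_blinfun_compose mult_mono[OF H3n \<Psi>N _ norm_ge_zero]])
      show "0 \<le> norm As * Ls + Lg * (1 + Lc)" using Lc0 Lg0 order_trans[OF norm_ge_zero SL] by simp
    qed
    then show ?thesis using I3 by linarith
  qed
  have Teq: "Theta Ac Aui As g kc \<Lambda> = (\<lambda>x. DS (t1 x) (t2 x) (t3 x))"
    unfolding Theta_def Let_def t1_def t2_def t3_def h3_def \<Psi>_def \<Phi>_def K_def r_def ku_def ks_def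
    by (rule refl)
  define T where "T x = (injC o\<^sub>L T1 x) + (injU o\<^sub>L T2 x) + (injS o\<^sub>L T3 x)" for x
  have DT: "D1 (\<lambda>x. DS (t1 x) (t2 x) (t3 x)) T"
    using D1_add[OF D1_add[OF D1_blin[OF Dt1, of injC] D1_blin[OF Dt2, of injU]] D1_blin[OF Dt3, of injS]]
    unfolding T_def[abs_def] by (simp add: DS_add)
  have bT: "bounded (range (\<lambda>x. DS (t1 x) (t2 x) (t3 x)))"
    using bounded_range_add[OF bounded_range_add[OF bounded_range_blin[OF bt1, of injC] bounded_range_blin[OF bt2, of injU]]
      bounded_range_blin[OF bt3, of injS]] by (simp add: DS_add)
  have CT: "C1 (Theta Ac Aui As g kc \<Lambda>) T" unfolding Teq C1_def using DT bT by blast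
  have C1t1: "C1 t1 T1" and C1t2: "C1 t2 T2" and C1t3: "C1 t3 T3" unfolding C1_def using Dt1 Dt2 Dt3 bt1 bt2 bt3 by auto
  have Tck: "Ckb 1 (Theta Ac Aui As g kc \<Lambda>)" by (rule C1_Ckb[OF CT])
  have T00: "Theta Ac Aui As g kc \<Lambda> 0 = 0"
    unfolding Teq t1_def t2_def t3_def h3_def using \<Phi>0 \<Psi>0 K0 g0 kc0 r0 by (simp add: DS_zero)
  have T0: "T 0 = 0"
    unfolding T_def T1_def T2_def T3_def H3_def using \<Phi>0 \<Psi>0 K0 G0 Kc0 R0 by simp
  have DZ: "D_zero_at0 (Theta Ac Aui As g kc \<Lambda>)" using Dzero_iff[OF Tck] dv_unique[OF CT] T0 by simp
  have p1: "(\<lambda>x. pc (Theta Ac Aui As g kc \<Lambda> x)) = t1" unfolding Teq by simp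
  have p2: "(\<lambda>x. pu (Theta Ac Aui As g kc \<Lambda> x)) = t2" unfolding Teq by simp
  have p3: "(\<lambda>x. ps (Theta Ac Aui As g kc \<Lambda> x)) = t3" unfolding Teq by simp
  have e1: "Dsup t1 \<le> Lr" using le_Dsup[OF C1_Ckb[OF C1t1]] T1n unfolding dv_unique[OF C1t1] by blast
  have e2: "Dsup t2 \<le> Lu" using le_Dsup[OF C1_Ckb[OF C1t2]] T2n unfolding dv_unique[OF C1t2] by blast
  have e3: "Dsup t3 \<le> Ls" using le_Dsup[OF C1_Ckb[OF C1t3]] T3n unfolding dv_unique[OF C1t3] by blast
  show "Theta Ac Aui As g kc \<Lambda> \<in> Gamma0 Lr Lu Ls"
    unfolding Gamma0_def using Tck T00 DZ e1 e2 e3 p1 p2 p3 by simp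
qed


lemma C1_zero: "C1 (\<lambda>x. 0) (\<lambda>x. 0)"
  unfolding C1_def D1_def by (auto simp: zero_blinfun.rep_eq)

lemma Ckb_zero: "Ckb 1 (\<lambda>x. 0)" by (rule C1_Ckb[OF C1_zero])
lemma dv_zero: "dv (\<lambda>x. 0) = (\<lambda>x. 0)" by (rule dv_unique[OF C1_zero])
lemma Dsup_zero: "0 \<le> L \<Longrightarrow> Dsup (\<lambda>x. 0) \<le> L"
  by (rule le_Dsup[OF Ckb_zero]) (simp add: dv_zero)

lemma zero_in_Gamma0:
  assumes "0 \<le> Lr" "0 \<le> Lu" "0 \<le> Ls"
  shows "(\<lambda>x. 0) \<in> Gamma0 Lr Lu Ls"
proof -
  have "D_zero_at0 (\<lambda>x::'a::real_normed_vector. 0 :: ('a, 'b::real_normed_vector, 'c::real_normed_vector) dsum)"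
    by (subst Dzero_iff[OF Ckb_zero]) (simp add: dv_zero)
  moreover have "Ckb 1 (\<lambda>x::'a. 0 :: ('a, 'b, 'c) dsum)" by (rule Ckb_zero)
  ultimately show ?thesis unfolding Gamma0_def using assms by (simp add: Dsup_zero)
qed

theorem theorem3p3:
  fixes n :: nat
    and Ac Aci :: "'c::banach \<Rightarrow>\<^sub>L 'c"
    and Au Aui :: "'u::banach \<Rightarrow>\<^sub>L 'u"
    and As :: "'s::banach \<Rightarrow>\<^sub>L 's"
    and g :: "('c, 'u, 's) dsum \<Rightarrow> ('c, 'u, 's) dsum"
    and kc :: "'c \<Rightarrow> 'c"
    and Lg Lc :: real
  assumes n2: "n \<ge> 2"
    and Ac_inv: "Ac o\<^sub>L Aci = id_blinfun" "Aci o\<^sub>L Ac = id_blinfun"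
    and Au_inv: "Au o\<^sub>L Aui = id_blinfun" "Aui o\<^sub>L Au = id_blinfun"
    and gap_s: "\<forall>m. 1 \<le> m \<and> m \<le> n \<longrightarrow> norm Aci ^ m * norm As < 1"
    and gap_u: "\<forall>m. 1 \<le> m \<and> m \<le> n \<longrightarrow> norm Aui * norm Ac ^ m < 1"
    and Lg_nonneg: "0 \<le> Lg" and Lc_nonneg: "0 \<le> Lc"
    and g_Cn: "Ckb n g" and g0: "g 0 = 0" and Dg0: "D_zero_at0 g" and Dg: "Dsup g \<le> Lg"
    and kc_Cn: "Ckb n kc" and kc0: "kc 0 = 0" and Dkc0: "D_zero_at0 kc" and Dkc: "Dsup kc \<le> Lc"
    and S2: "S_cond 2 (norm Ac) (norm Aci) (norm Aui) (norm As) Lg Lc"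
  shows "(\<forall>\<Lambda> \<in> Gamma0_of Ac Aci Aui As Lg Lc. bij (\<lambda>x. Ac x + pc (\<Lambda> x)))
       \<and> Gamma0_of Ac Aci Aui As Lg Lc \<noteq> {}
       \<and> (\<forall>\<Lambda> \<in> Gamma0_of Ac Aci Aui As Lg Lc.
            Theta Ac Aui As g kc \<Lambda> \<in> Gamma0_of Ac Aci Aui As Lg Lc)
       \<and> C1b_closed (Gamma0_of Ac Aci Aui As Lg Lc)"
proof -
  have n1: "1 \<le> n" using n2 by simp
  have gC1: "Ckb 1 g" by (rule Ckb_mono[OF g_Cn n1])
  have kC1: "Ckb 1 kc" by (rule Ckb_mono[OF kc_Cn n1])
  have gC: "C1 g (dv g)" by (rule Ckb1_C1[OF gC1])
  have kC: "C1 kc (dv kc)" by (rule Ckb1_C1[OF kC1])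
  have GL: "norm (dv g y) \<le> Lg" for y by (rule Dsup_le[OF gC1 Dg])
  have KL: "norm (dv kc y) \<le> Lc" for y by (rule Dsup_le[OF kC1 Dkc])
  have G0: "dv g 0 = 0" using Dzero_iff[OF gC1] Dg0 by simp
  have K0: "dv kc 0 = 0" using Dzero_iff[OF kC1] Dkc0 by simp
  note cf = consts_facts[OF S2 Lg_nonneg Lc_nonneg norm_ge_zero norm_ge_zero norm_ge_zero norm_ge_zero]
  have bLr: "norm Aci * L_r (norm Ac) Lg Lc < 1" using cf(3) .
  note th = theta_in[OF Ac_inv(2) Ac_inv(1) gC GL G0 g0 kC KL K0 kc0 cf(2) bLr cf(6) cf(7) Lc_nonneg Lg_nonneg
      cf(8) cf(9) cf(10)]
  show ?thesis
  proof (intro conjI ballI)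
    fix \<Lambda> assume "\<Lambda> \<in> Gamma0_of Ac Aci Aui As Lg Lc"
    then have "\<Lambda> \<in> Gamma0 (L_r (norm Ac) Lg Lc) (L_u (norm Ac) (norm Aui) Lg Lc) (L_s (norm Ac) (norm Aci) (norm As) Lg Lc)"
      unfolding Gamma0_of_def .
    note t = th[OF this]
    show "bij (\<lambda>x. Ac x + pc (\<Lambda> x))" by (rule t(1))
    show "Theta Ac Aui As g kc \<Lambda> \<in> Gamma0_of Ac Aci Aui As Lg Lc" unfolding Gamma0_of_def by (rule t(2))
  next
    show "Gamma0_of Ac Aci Aui As Lg Lc \<noteq> {}"
      unfolding Gamma0_of_def using zero_in_Gamma0[OF cf(2) cf(4) cf(5)] by blast
  next
    show "C1b_closed (Gamma0_of Ac Aci Aui As Lg Lc)" unfolding Gamma0_of_def by (rule Gamma0_closed)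
  qed
qed

end
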